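(* Let $G$ be a strictly pseudo-solvable group such that $3\text-5$ is an edge of $\overline\Gamma(G)$. Then (in a chief series of) $G$ there is exactly one non-solvable chief factor, and it is isomorphic to $A_5$.
   Context: For a finite group $G$, the prime graph $\Gamma(G)$ has vertex set the prime divisors of $|G|$, with distinct primes $p,q$ adjacent iff $G$ has an element of order $pq$; $\overline\Gamma(G)$ is its complement graph. A finite group is pseudo-solvable if each composition factor is cyclic or isomorphic to $A_5$; strictly pseudo-solvable means pseudo-solvable and not solvable. *)

theory Defs
  imports "HOL-Algebra.Algebra" "HOL-Algebra.Sym_Groups" "HOL-Algebra.Solvable_Groups"
          "HOL-Algebra.Elementary_Groups" "HOL-Algebra.Multiplicative_Group"
          "HOL-Algebra.SimpleGroups"
begin

definition series_factor :: "('a, 'b) monoid_scheme \<Rightarrow> 'a set list \<Rightarrow> nat \<Rightarrow> 'a set monoid"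
  where "series_factor G Hs i = (G\<lparr>carrier := Hs ! Suc i\<rparr>) Mod (Hs ! i)"

definition composition_series :: "('a, 'b) monoid_scheme \<Rightarrow> 'a set list \<Rightarrow> bool"
  where "composition_series G Hs \<longleftrightarrow>
     Hs \<noteq> [] \<and> hd Hs = {\<one>\<^bsub>G\<^esub>} \<and> last Hs = carrier G \<and>
     (\<forall>i < length Hs. subgroup (Hs ! i) G) \<and>
     (\<forall>i. Suc i < length Hs \<longrightarrow>
          Hs ! i \<lhd> G\<lparr>carrier := Hs ! Suc i\<rparr> \<and> simple_group (series_factor G Hs i))"

definition pseudo_solvable :: "('a, 'b) monoid_scheme \<Rightarrow> bool"
  where "pseudo_solvable G \<longleftrightarrow>
     (\<forall>Hs. composition_series G Hs \<longrightarrow>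
        (\<forall>i. Suc i < length Hs \<longrightarrow>
           cyclic_group (series_factor G Hs i) \<or> series_factor G Hs i \<cong> alt_group 5))"

definition strictly_pseudo_solvable :: "('a, 'b) monoid_scheme \<Rightarrow> bool"
  where "strictly_pseudo_solvable G \<longleftrightarrow> pseudo_solvable G \<and> \<not> solvable G"

definition prime_graph_edge :: "('a, 'b) monoid_scheme \<Rightarrow> nat \<Rightarrow> nat \<Rightarrow> bool"
  where "prime_graph_edge G p q \<longleftrightarrow>
     Factorial_Ring.prime p \<and> Factorial_Ring.prime q \<and> p dvd order G \<and> q dvd order G \<and> p \<noteq> q \<and>
     (\<exists>x \<in> carrier G. group.ord G x = p * q)"

definition compl_prime_graph_edge :: "('a, 'b) monoid_scheme \<Rightarrow> nat \<Rightarrow> nat \<Rightarrow> bool"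
  where "compl_prime_graph_edge G p q \<longleftrightarrow>
     Factorial_Ring.prime p \<and> Factorial_Ring.prime q \<and> p dvd order G \<and> q dvd order G \<and> p \<noteq> q \<and>
     \<not> prime_graph_edge G p q"

definition chief_series :: "('a, 'b) monoid_scheme \<Rightarrow> 'a set list \<Rightarrow> bool"
  where "chief_series G Ns \<longleftrightarrow>
     Ns \<noteq> [] \<and> hd Ns = {\<one>\<^bsub>G\<^esub>} \<and> last Ns = carrier G \<and>
     (\<forall>i < length Ns. Ns ! i \<lhd> G) \<and>
     (\<forall>i. Suc i < length Ns \<longrightarrow>
        Ns ! i \<subset> Ns ! Suc i \<and>
        \<not> (\<exists>M. M \<lhd> G \<and> Ns ! i \<subset> M \<and> M \<subset> Ns ! Suc i))"

end

theory Submission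
  imports Defs
begin




definition cs_chain :: "('a, 'b) monoid_scheme \<Rightarrow> 'a set list \<Rightarrow> bool" where
  "cs_chain G Hs \<longleftrightarrow> Hs \<noteq> [] \<and> (\<forall>i < length Hs. subgroup (Hs ! i) G) \<and>
     (\<forall>i. Suc i < length Hs \<longrightarrow>
          Hs ! i \<lhd> G\<lparr>carrier := Hs ! Suc i\<rparr> \<and> simple_group (series_factor G Hs i))"

lemma cs_chain_single: "subgroup L G \<Longrightarrow> cs_chain G [L]"
  unfolding cs_chain_def by auto

lemma cs_chain_append:
  assumes H: "cs_chain G Hs" and K: "cs_chain G Ks"
    and n: "last Hs \<lhd> G\<lparr>carrier := hd Ks\<rparr>"
    and s: "simple_group (G\<lparr>carrier := hd Ks\<rparr> Mod last Hs)"
  shows "cs_chain G (Hs @ Ks)"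
proof -
  have Hne: "Hs \<noteq> []" and Kne: "Ks \<noteq> []" using H K unfolding cs_chain_def by auto
  let ?A = "Hs @ Ks"
  have sub: "subgroup (?A ! i) G" if "i < length ?A" for i
  proof (cases "i < length Hs")
    case True then show ?thesis using H unfolding cs_chain_def by (simp add: nth_append)
  next
    case False then show ?thesis using K that unfolding cs_chain_def by (simp add: nth_append)
  qed
  have step: "?A ! i \<lhd> G\<lparr>carrier := ?A ! Suc i\<rparr> \<and> simple_group (series_factor G ?A i)"
    if i: "Suc i < length ?A" for i
  proof -
    consider (a) "Suc i < length Hs" | (b) "Suc i = length Hs" | (c) "Suc i > length Hs" by linarith
    then show ?thesis
    proof cases
      case a
      then have "?A ! i = Hs ! i" "?A ! Suc i = Hs ! Suc i" by (auto simp: nth_append)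
      then show ?thesis using H a unfolding cs_chain_def series_factor_def by auto
    next
      case b
      then have "i = length Hs - 1" by simp
      then have "?A ! i = last Hs" using Hne b by (simp add: nth_append last_conv_nth)
      moreover have "?A ! Suc i = hd Ks" using b Kne by (simp add: nth_append hd_conv_nth)
      ultimately show ?thesis using n s unfolding series_factor_def by simp
    next
      case c
      define j where "j = i - length Hs"
      have ij: "i = length Hs + j" using c j_def by simp
      then have "?A ! i = Ks ! j" "?A ! Suc i = Ks ! Suc j" by (auto simp: nth_append)
      moreover have "Suc j < length Ks" using i ij by simp
      ultimately show ?thesis using K unfolding cs_chain_def series_factor_def by auto
    qed
  qed
  show ?thesis unfolding cs_chain_def using sub step Hne by auto
qed

lemma cs_chain_comp:
  "cs_chain G Hs \<Longrightarrow> hd Hs = {\<one>\<^bsub>G\<^esub>} \<Longrightarrow> last Hs = carrier G \<Longrightarrow> composition_series G Hs"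
  unfolding cs_chain_def composition_series_def by auto


context group begin

lemma normal_sub_iff:
  assumes L: "subgroup L G"
  shows "K \<lhd> G\<lparr>carrier := L\<rparr> \<longleftrightarrow> subgroup K G \<and> K \<subseteq> L \<and> (\<forall>x\<in>L. \<forall>h\<in>K. x \<otimes> h \<otimes> inv x \<in> K)"
proof -
  interpret GL: group "G\<lparr>carrier := L\<rparr>" by (rule subgroup_imp_group[OF L])
  have "K \<lhd> G\<lparr>carrier := L\<rparr> \<longleftrightarrow> subgroup K (G\<lparr>carrier := L\<rparr>) \<and> (\<forall>x\<in>L. \<forall>h\<in>K. x \<otimes> h \<otimes> inv\<^bsub>G\<lparr>carrier := L\<rparr>\<^esub> x \<in> K)"
    using GL.normal_inv_iff by simp
  also have "\<dots> \<longleftrightarrow> subgroup K G \<and> K \<subseteq> L \<and> (\<forall>x\<in>L. \<forall>h\<in>K. x \<otimes> h \<otimes> inv x \<in> K)"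
    using L incl_subgroup[OF L] subgroup_incl[OF _ L] m_inv_consistent[OF L] subgroup.subset[of K "G\<lparr>carrier := L\<rparr>"]
    by auto
  finally show ?thesis .
qed

lemma normal_sub_subgroup:
  assumes "subgroup L G" "K \<lhd> G\<lparr>carrier := L\<rparr>"
  shows "subgroup K G" "K \<subseteq> L" "\<And>x h. x \<in> L \<Longrightarrow> h \<in> K \<Longrightarrow> x \<otimes> h \<otimes> inv x \<in> K"
  using assms normal_sub_iff by auto

lemma sub_pow_closed:
  assumes "subgroup L G" "a \<in> L" shows "a [^] (n::nat) \<in> L"
proof -
  interpret GL: group "G\<lparr>carrier := L\<rparr>" by (rule subgroup_imp_group[OF assms(1)])
  have "a [^]\<^bsub>G\<lparr>carrier := L\<rparr>\<^esub> n \<in> L" using GL.nat_pow_closed assms(2) by simp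
  then show ?thesis using nat_pow_consistent by simp
qed

lemma quot_group:
  assumes "subgroup L G" "K \<lhd> G\<lparr>carrier := L\<rparr>"
  shows "group (G\<lparr>carrier := L\<rparr> Mod K)"
  using assms(2) by (rule normal.factorgroup_is_group)

lemma quot_carrier:
  "carrier (G\<lparr>carrier := L\<rparr> Mod K) = (\<lambda>a. K #> a) ` L"
  by (simp add: carrier_FactGroup)

lemma quot_one: "\<one>\<^bsub>G\<lparr>carrier := L\<rparr> Mod K\<^esub> = K"
  by simp

lemma quot_mult:
  assumes "subgroup L G" "K \<lhd> G\<lparr>carrier := L\<rparr>" "a \<in> L" "b \<in> L"
  shows "(K #> a) \<otimes>\<^bsub>G\<lparr>carrier := L\<rparr> Mod K\<^esub> (K #> b) = K #> (a \<otimes> b)"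
  using normal.rcos_sum[OF assms(2), of a b] assms by simp

lemma quot_pow:
  assumes L: "subgroup L G" and K: "K \<lhd> G\<lparr>carrier := L\<rparr>" and a: "a \<in> L"
  shows "(K #> a) [^]\<^bsub>G\<lparr>carrier := L\<rparr> Mod K\<^esub> (n::nat) = K #> (a [^] n)"
proof (induction n)
  case 0
  have "K \<subseteq> carrier G" using normal_sub_subgroup[OF L K] subgroup.subset by blast
  then show ?case by simp
next
  case (Suc n)
  have an: "a [^] n \<in> L" using sub_pow_closed[OF L a] .
  show ?case using Suc quot_mult[OF L K an a] by simp
qed

lemma quot_eq_iff:
  assumes L: "subgroup L G" and K: "K \<lhd> G\<lparr>carrier := L\<rparr>" and a: "a \<in> L" and b: "b \<in> L"
  shows "K #> a = K #> b \<longleftrightarrow> a \<otimes> inv b \<in> K"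
proof -
  have sK: "subgroup K G" using normal_sub_subgroup[OF L K] by blast
  have aG: "a \<in> carrier G" and bG: "b \<in> carrier G" using a b L subgroup.subset by auto
  show ?thesis
  proof
    assume "K #> a = K #> b"
    then have "a \<in> K #> b" using rcos_self[OF aG sK] by simp
    then show "a \<otimes> inv b \<in> K" using subgroup.rcos_module_imp[OF sK is_group bG] by blast
  next
    assume "a \<otimes> inv b \<in> K"
    then have "a \<in> K #> b" using subgroup.rcos_module_rev[OF sK is_group bG aG] by blast
    then show "K #> a = K #> b" using repr_independence[OF _ bG sK] by simp
  qed
qed

lemma quot_one_iff:
  assumes L: "subgroup L G" and K: "K \<lhd> G\<lparr>carrier := L\<rparr>" and a: "a \<in> L"
  shows "K #> a = K \<longleftrightarrow> a \<in> K"
proof -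
  have sK: "subgroup K G" using normal_sub_subgroup[OF L K] by blast
  have "K #> \<one> = K" using coset_mult_one[OF subgroup.subset[OF sK]] .
  moreover have "\<one> \<in> L" using L subgroup.one_closed by blast
  ultimately show ?thesis using quot_eq_iff[OF L K a, of \<one>] a L subgroup.subset by fastforce
qed

lemma quot_order:
  assumes L: "subgroup L G" and K: "K \<lhd> G\<lparr>carrier := L\<rparr>" and fin: "finite (carrier G)"
  shows "order (G\<lparr>carrier := L\<rparr> Mod K) * card K = card L"
proof -
  interpret GL: group "G\<lparr>carrier := L\<rparr>" by (rule subgroup_imp_group[OF L])
  have "subgroup K (G\<lparr>carrier := L\<rparr>)" using K normal_imp_subgroup by blast
  from GL.lagrange[OF this] show ?thesis by (simp add: order_def FactGroup_def)
qed

lemma sub_int_pow_closed: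
  assumes "subgroup L G" "a \<in> L" shows "a [^] (i::int) \<in> L"
proof -
  interpret GL: group "G\<lparr>carrier := L\<rparr>" by (rule subgroup_imp_group[OF assms(1)])
  have "a [^]\<^bsub>G\<lparr>carrier := L\<rparr>\<^esub> i \<in> L" using GL.int_pow_closed assms(2) by simp
  then show ?thesis using int_pow_consistent[OF assms] by simp
qed

lemma modpow_left:
  assumes L: "subgroup L G" and K: "K \<lhd> G\<lparr>carrier := L\<rparr>" and k: "k \<in> K" and y: "y \<in> L"
  shows "(k \<otimes> y) [^] (n::nat) \<in> K \<longleftrightarrow> y [^] n \<in> K"
proof -
  have KL: "K \<subseteq> L" using normal_sub_subgroup[OF L K] by blast
  have kL: "k \<in> L" using k KL by blast
  have LG: "L \<subseteq> carrier G" using L subgroup.subset by blast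
  have kyL: "k \<otimes> y \<in> L" using subgroup.m_closed[OF L] kL y by blast
  have "(k \<otimes> y) \<otimes> inv y = k" using kL y LG by (simp add: m_assoc subsetD)
  then have e: "K #> (k \<otimes> y) = K #> y" using quot_eq_iff[OF L K kyL y] k by simp
  have "K #> ((k \<otimes> y) [^] n) = K #> (y [^] n)"
    using quot_pow[OF L K kyL, of n] quot_pow[OF L K y, of n] e by simp
  then show ?thesis
    using quot_one_iff[OF L K sub_pow_closed[OF L kyL, of n]] quot_one_iff[OF L K sub_pow_closed[OF L y, of n]] by metis
qed

lemma modpow_right:
  assumes L: "subgroup L G" and K: "K \<lhd> G\<lparr>carrier := L\<rparr>" and k: "k \<in> K" and y: "y \<in> L"
  shows "(y \<otimes> k) [^] (n::nat) \<in> K \<longleftrightarrow> y [^] n \<in> K"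
proof -
  have KL: "K \<subseteq> L" using normal_sub_subgroup[OF L K] by blast
  have kL: "k \<in> L" using k KL by blast
  have LG: "L \<subseteq> carrier G" using L subgroup.subset by blast
  have kyL: "y \<otimes> k \<in> L" using subgroup.m_closed[OF L] kL y by blast
  have "(y \<otimes> k) \<otimes> inv y \<in> K" using normal_sub_subgroup(3)[OF L K y k] .
  then have e: "K #> (y \<otimes> k) = K #> y" using quot_eq_iff[OF L K kyL y] by simp
  have "K #> ((y \<otimes> k) [^] n) = K #> (y [^] n)"
    using quot_pow[OF L K kyL, of n] quot_pow[OF L K y, of n] e by simp
  then show ?thesis
    using quot_one_iff[OF L K sub_pow_closed[OF L kyL, of n]] quot_one_iff[OF L K sub_pow_closed[OF L y, of n]] by metis
qed

lemma pow_in_prime: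
  assumes K: "subgroup K G" and x: "x \<in> carrier G" and p: "Factorial_Ring.prime (p::nat)"
    and xp: "x [^] p \<in> K" and xK: "x \<notin> K" and xn: "x [^] (n::nat) \<in> K"
  shows "p dvd n"
proof (rule ccontr)
  assume nd: "\<not> p dvd n"
  have cp: "coprime p n" by (rule prime_imp_coprime[OF p nd])
  have g0: "gcd p n = 1" using cp coprime_iff_gcd_eq_1 by blast
  have g: "gcd (int p) (int n) = 1" using g0 gcd_int_int_eq[of p n] by simp
  obtain u v :: int where uv: "u * int p + v * int n = 1" using bezout_int[of "int p" "int n"] g by auto
  have "x = x [^] (1::int)" using x by (simp add: int_pow_1)
  also have "\<dots> = x [^] (int p * u + int n * v)" using uv by (simp add: mult.commute)
  also have "\<dots> = x [^] (int p * u) \<otimes> x [^] (int n * v)" using int_pow_mult[OF x] by blast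
  also have "\<dots> = (x [^] int p) [^] u \<otimes> (x [^] int n) [^] v"
    using int_pow_pow[OF x] by simp
  also have "\<dots> = (x [^] p) [^] u \<otimes> (x [^] n) [^] v"
    by (simp add: int_pow_int)
  finally have "x = (x [^] p) [^] u \<otimes> (x [^] n) [^] v" .
  moreover have "(x [^] p) [^] u \<in> K" "(x [^] n) [^] v \<in> K"
    using sub_int_pow_closed[OF K xp] sub_int_pow_closed[OF K xn] by auto
  ultimately have "x \<in> K" using subgroup.m_closed[OF K] by metis
  then show False using xK by blast
qed

lemma quot_hom:
  assumes L: "subgroup L G" and K: "K \<lhd> G\<lparr>carrier := L\<rparr>"
  shows "group_hom (G\<lparr>carrier := L\<rparr>) (G\<lparr>carrier := L\<rparr> Mod K) (\<lambda>a. K #> a)"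
proof -
  have "(\<lambda>a. K #>\<^bsub>G\<lparr>carrier := L\<rparr>\<^esub> a) \<in> hom (G\<lparr>carrier := L\<rparr>) (G\<lparr>carrier := L\<rparr> Mod K)"
    using normal.r_coset_hom_Mod[OF K] .
  then have "(\<lambda>a. K #> a) \<in> hom (G\<lparr>carrier := L\<rparr>) (G\<lparr>carrier := L\<rparr> Mod K)" by simp
  then show ?thesis
    using subgroup_imp_group[OF L] quot_group[OF L K]
    by (intro group_hom.intro group_hom_axioms.intro) auto
qed
lemma max_normal_simple:
  assumes L: "subgroup L G" and M: "M \<lhd> G\<lparr>carrier := L\<rparr>" and ne: "M \<noteq> L"
    and fin: "finite (carrier G)"
    and max: "!!T. T \<lhd> G\<lparr>carrier := L\<rparr> \<Longrightarrow> M \<subseteq> T \<Longrightarrow> T = M \<or> T = L"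
  shows "simple_group (G\<lparr>carrier := L\<rparr> Mod M)"
proof -
  let ?GL = "G\<lparr>carrier := L\<rparr>"
  let ?Q = "G\<lparr>carrier := L\<rparr> Mod M"
  let ?p = "\<lambda>a. M #> a"
  interpret Q: group ?Q by (rule quot_group[OF L M])
  interpret h: group_hom ?GL ?Q ?p by (rule quot_hom[OF L M])
  have MsubL: "M \<subseteq> L" and sM: "subgroup M G" using normal_sub_subgroup[OF L M] by auto
  have LG: "L \<subseteq> carrier G" using L subgroup.subset by blast
  have finL: "finite L" using fin LG finite_subset by blast
  have cMlt: "card M < card L" using MsubL ne finL by (simp add: psubset_card_mono psubset_eq)
  have ord: "order ?Q * card M = card L" by (rule quot_order[OF L M fin])
  have "order ?Q > 1"
  proof (rule ccontr)
    assume "\<not> order ?Q > 1"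
    then have "order ?Q \<le> 1" by simp
    then have "order ?Q * card M \<le> card M" by simp
    then show False using ord cMlt by simp
  qed
  moreover have "H = carrier ?Q \<or> H = {\<one>\<^bsub>?Q\<^esub>}" if H: "H \<lhd> ?Q" for H
  proof -
    have sH: "subgroup H ?Q" using H normal_imp_subgroup by blast
    define Y where "Y = {a \<in> L. ?p a \<in> H}"
    have YL: "Y \<subseteq> L" unfolding Y_def by blast
    have pc: "\<And>a. a \<in> L \<Longrightarrow> ?p a \<in> carrier ?Q" using h.hom_closed by simp
    have sY: "subgroup Y G"
    proof (rule subgroupI)
      show "Y \<subseteq> carrier G" using YL LG by blast
      show "Y \<noteq> {}"
      proof -
        have "\<one> \<in> L" using L subgroup.one_closed by blast
        moreover have "?p \<one> \<in> H" using h.hom_one subgroup.one_closed[OF sH] by simp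
        ultimately show ?thesis unfolding Y_def by blast
      qed
      show "inv a \<in> Y" if a: "a \<in> Y" for a
      proof -
        have aL: "a \<in> L" using a YL by blast
        have "?p (inv\<^bsub>?GL\<^esub> a) = inv\<^bsub>?Q\<^esub> (?p a)" using h.hom_inv aL by simp
        moreover have "inv\<^bsub>?GL\<^esub> a = inv a" using m_inv_consistent[OF L aL] .
        moreover have "inv\<^bsub>?Q\<^esub> (?p a) \<in> H" using subgroup.m_inv_closed[OF sH] a unfolding Y_def by blast
        moreover have "inv a \<in> L" using subgroup.m_inv_closed[OF L aL] .
        ultimately show ?thesis unfolding Y_def by simp
      qed
      show "a \<otimes> b \<in> Y" if a: "a \<in> Y" and b: "b \<in> Y" for a b
      proof -
        have aL: "a \<in> L" and bL: "b \<in> L" using a b YL by auto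
        have "?p (a \<otimes> b) = ?p a \<otimes>\<^bsub>?Q\<^esub> ?p b" using h.hom_mult aL bL by simp
        moreover have "?p a \<otimes>\<^bsub>?Q\<^esub> ?p b \<in> H" using subgroup.m_closed[OF sH] a b unfolding Y_def by blast
        moreover have "a \<otimes> b \<in> L" using subgroup.m_closed[OF L aL bL] .
        ultimately show ?thesis unfolding Y_def by simp
      qed
    qed
    have conj: "x \<otimes> a \<otimes> inv x \<in> Y" if x: "x \<in> L" and a: "a \<in> Y" for x a
    proof -
      have aL: "a \<in> L" using a YL by blast
      have ixL: "inv x \<in> L" using subgroup.m_inv_closed[OF L x] .
      have xa: "x \<otimes> a \<in> L" using subgroup.m_closed[OF L x aL] .
      have xax: "x \<otimes> a \<otimes> inv x \<in> L" using subgroup.m_closed[OF L xa ixL] .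
      have "?p (x \<otimes> a \<otimes> inv x) = ?p x \<otimes>\<^bsub>?Q\<^esub> ?p a \<otimes>\<^bsub>?Q\<^esub> ?p (inv x)"
        using h.hom_mult x aL xa ixL by simp
      also have "?p (inv x) = inv\<^bsub>?Q\<^esub> (?p x)"
        using h.hom_inv[of x] x m_inv_consistent[OF L x] by simp
      finally have e: "?p (x \<otimes> a \<otimes> inv x) = ?p x \<otimes>\<^bsub>?Q\<^esub> ?p a \<otimes>\<^bsub>?Q\<^esub> inv\<^bsub>?Q\<^esub> (?p x)" .
      have "?p x \<otimes>\<^bsub>?Q\<^esub> ?p a \<otimes>\<^bsub>?Q\<^esub> inv\<^bsub>?Q\<^esub> (?p x) \<in> H"
        using normal.inv_op_closed2[OF H pc[OF x]] a unfolding Y_def by blast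
      then show ?thesis using e xax unfolding Y_def by simp
    qed
    have nY: "Y \<lhd> ?GL" using normal_sub_iff[OF L] sY YL conj by blast
    have MY: "M \<subseteq> Y"
    proof
      fix a assume a: "a \<in> M"
      then have aL: "a \<in> L" using MsubL by blast
      have "?p a = M" using quot_one_iff[OF L M aL] a by simp
      then have "?p a \<in> H" using subgroup.one_closed[OF sH] by simp
      then show "a \<in> Y" using aL unfolding Y_def by blast
    qed
    have HQ: "H \<subseteq> carrier ?Q" using sH subgroup.subset by blast
    from max[OF nY MY] show ?thesis
    proof
      assume "Y = M"
      have "H \<subseteq> {\<one>\<^bsub>?Q\<^esub>}"
      proof
        fix S assume S: "S \<in> H"
        then obtain a where aL: "a \<in> L" and Sa: "S = ?p a" using HQ quot_carrier by blast
        then have "a \<in> Y" using S unfolding Y_def by blast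
        then have "a \<in> M" using \<open>Y = M\<close> by simp
        then show "S \<in> {\<one>\<^bsub>?Q\<^esub>}" using quot_one_iff[OF L M aL] Sa by simp
      qed
      then show ?thesis using subgroup.one_closed[OF sH] by blast
    next
      assume "Y = L"
      have "carrier ?Q \<subseteq> H"
      proof
        fix S assume "S \<in> carrier ?Q"
        then obtain a where aL: "a \<in> L" and Sa: "S = ?p a" using quot_carrier by blast
        then have "a \<in> Y" using \<open>Y = L\<close> by simp
        then show "S \<in> H" using Sa unfolding Y_def by blast
      qed
      then show ?thesis using HQ by blast
    qed
  qed
  ultimately show ?thesis
    by (intro simple_group.intro simple_group_axioms.intro Q.is_group) auto
qed

lemma chain_exists:
  assumes fin: "finite (carrier G)" and L: "subgroup L G" and H: "H \<lhd> G\<lparr>carrier := L\<rparr>"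
  shows "\<exists>Hs. cs_chain G Hs \<and> hd Hs = H \<and> last Hs = L"
  using L H
proof (induction "card L" arbitrary: L rule: less_induct)
  case less
  note L = less.prems(1) and H = less.prems(2)
  have HL: "H \<subseteq> L" and sH: "subgroup H G" using normal_sub_subgroup[OF L H] by auto
  have LG: "L \<subseteq> carrier G" using L subgroup.subset by blast
  have finL: "finite L" using fin LG finite_subset by blast
  show ?case
  proof (cases "H = L")
    case True
    then show ?thesis using cs_chain_single[OF L] by (intro exI[of _ "[L]"]) auto
  next
    case False
    define S where "S = {T. T \<lhd> G\<lparr>carrier := L\<rparr> \<and> H \<subseteq> T \<and> T \<noteq> L}"
    have HS: "H \<in> S" using H False unfolding S_def by blast
    have bound: "\<forall>T. T \<in> S \<longrightarrow> card T < Suc (card L)"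
    proof (intro allI impI)
      fix T assume "T \<in> S"
      then have "T \<lhd> G\<lparr>carrier := L\<rparr>" unfolding S_def by blast
      then have "T \<subseteq> L" using normal_sub_subgroup(2)[OF L] by blast
      then have "card T \<le> card L" using card_mono[OF finL] by blast
      then show "card T < Suc (card L)" by simp
    qed
    obtain M where MS: "M \<in> S" and Mmax: "\<forall>T. T \<in> S \<longrightarrow> card T \<le> card M"
      using ex_has_greatest_nat[of "\<lambda>T. T \<in> S" H card "Suc (card L)"] HS bound by blast
    have M: "M \<lhd> G\<lparr>carrier := L\<rparr>" and HM: "H \<subseteq> M" and MneL: "M \<noteq> L" using MS unfolding S_def by auto
    have MsubL: "M \<subseteq> L" and sM: "subgroup M G" using normal_sub_subgroup[OF L M] by auto
    have maxM: "T = M \<or> T = L" if T: "T \<lhd> G\<lparr>carrier := L\<rparr>" and MT: "M \<subseteq> T" for T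
    proof (rule ccontr)
      assume nt: "\<not> (T = M \<or> T = L)"
      then have "T \<in> S" using T MT HM unfolding S_def by blast
      then have "card T \<le> card M" using Mmax by blast
      moreover have "T \<subseteq> L" using normal_sub_subgroup(2)[OF L T] .
      then have "finite T" using finL finite_subset by blast
      ultimately have "M = T" using card_seteq[OF _ MT] by blast
      then show False using nt by blast
    qed
    have simp: "simple_group (G\<lparr>carrier := L\<rparr> Mod M)"
      by (rule max_normal_simple[OF L M MneL fin maxM]) auto
    have HnM: "H \<lhd> G\<lparr>carrier := M\<rparr>"
      using normal_sub_iff[OF sM] sH HM normal_sub_subgroup(3)[OF L H] MsubL by blast
    have "card M < card L" using MsubL MneL finL by (simp add: psubset_card_mono psubset_eq)
    then obtain Hs where Hs: "cs_chain G Hs" "hd Hs = H" "last Hs = M"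
      using less.hyps[OF _ sM HnM] by blast
    have "cs_chain G (Hs @ [L])"
      using cs_chain_append[OF Hs(1) cs_chain_single[OF L]] M simp Hs(3) by simp
    moreover have "hd (Hs @ [L]) = H" using Hs(1,2) unfolding cs_chain_def by simp
    ultimately show ?thesis by (intro exI[of _ "Hs @ [L]"]) simp
  qed
qed


end


lemma elem_prime:
  assumes H: "group H" and fin: "finite (carrier H)" and p: "Factorial_Ring.prime (p::nat)"
    and dv: "p dvd order H"
  shows "\<exists>u\<in>carrier H. u \<noteq> \<one>\<^bsub>H\<^esub> \<and> u [^]\<^bsub>H\<^esub> p = \<one>\<^bsub>H\<^esub>"
proof -
  obtain m where m: "order H = p ^ 1 * m" using dv by auto
  obtain P where P: "subgroup P H" "card P = p ^ 1" using sylow_thm[OF p H m fin] by blast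
  have cP: "card P = p" using P by simp
  have "p > 1" using p prime_gt_1_nat by blast
  then have "P \<noteq> {\<one>\<^bsub>H\<^esub>}" using cP by auto
  moreover have "\<one>\<^bsub>H\<^esub> \<in> P" using P(1) subgroup.one_closed by blast
  ultimately obtain u where u: "u \<in> P" "u \<noteq> \<one>\<^bsub>H\<^esub>" by blast
  interpret HP: group "H\<lparr>carrier := P\<rparr>" using group.subgroup_imp_group[OF H P(1)] .
  have "u [^]\<^bsub>H\<lparr>carrier := P\<rparr>\<^esub> order (H\<lparr>carrier := P\<rparr>) = \<one>\<^bsub>H\<lparr>carrier := P\<rparr>\<^esub>"
    using HP.pow_order_eq_1 u(1) by simp
  then have "u [^]\<^bsub>H\<lparr>carrier := P\<rparr>\<^esub> p = \<one>\<^bsub>H\<^esub>" using cP by (simp add: order_def)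
  then have "u [^]\<^bsub>H\<^esub> p = \<one>\<^bsub>H\<^esub>" using monoid.nat_pow_consistent[OF group.is_monoid[OF H]] by metis
  moreover have "u \<in> carrier H" using u(1) P(1) subgroup.subset by blast
  ultimately show ?thesis using u(2) by blast
qed

lemma comm_solvable: "comm_group H \<Longrightarrow> solvable H"
proof -
  assume c: "comm_group H"
  then have g: "group H" by (simp add: comm_group_def)
  have "derived H (carrier H) = {\<one>\<^bsub>H\<^esub>}" using comm_group.derived_eq_singleton[OF c] by simp
  then have "(derived H ^^ 1) (carrier H) = {\<one>\<^bsub>H\<^esub>}" by simp
  then show ?thesis using group.solvable_iff_trivial_derived_seq[OF g] by blast
qed

context group begin

lemma quot_comm:
  assumes L: "subgroup L G" and K: "K \<lhd> G\<lparr>carrier := L\<rparr>"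
    and c: "\<And>a b. a \<in> L \<Longrightarrow> b \<in> L \<Longrightarrow> a \<otimes> b \<otimes> inv a \<otimes> inv b \<in> K"
  shows "comm_group (G\<lparr>carrier := L\<rparr> Mod K)"
proof -
  interpret Q: group "G\<lparr>carrier := L\<rparr> Mod K" by (rule quot_group[OF L K])
  have LG: "L \<subseteq> carrier G" using L subgroup.subset by blast
  show ?thesis
  proof (rule Q.group_comm_groupI)
    fix x y assume x: "x \<in> carrier (G\<lparr>carrier := L\<rparr> Mod K)" and y: "y \<in> carrier (G\<lparr>carrier := L\<rparr> Mod K)"
    obtain a where a: "a \<in> L" "x = K #> a" using x quot_carrier by blast
    obtain b where b: "b \<in> L" "y = K #> b" using y quot_carrier by blast
    have aG: "a \<in> carrier G" and bG: "b \<in> carrier G" using a b LG by auto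
    have ab: "a \<otimes> b \<in> L" and ba: "b \<otimes> a \<in> L" using subgroup.m_closed[OF L] a b by auto
    have "(a \<otimes> b) \<otimes> inv (b \<otimes> a) = a \<otimes> b \<otimes> inv a \<otimes> inv b"
      using aG bG by (simp add: inv_mult_group m_assoc)
    then have "(a \<otimes> b) \<otimes> inv (b \<otimes> a) \<in> K" using c[OF a(1) b(1)] by simp
    then have "K #> (a \<otimes> b) = K #> (b \<otimes> a)" using quot_eq_iff[OF L K ab ba] by simp
    then show "x \<otimes>\<^bsub>G\<lparr>carrier := L\<rparr> Mod K\<^esub> y = y \<otimes>\<^bsub>G\<lparr>carrier := L\<rparr> Mod K\<^esub> x"
      using quot_mult[OF L K a(1) b(1)] quot_mult[OF L K b(1) a(1)] a b by simp
  qed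
qed

lemma quot_comm_rev:
  assumes L: "subgroup L G" and K: "K \<lhd> G\<lparr>carrier := L\<rparr>"
    and c: "comm_group (G\<lparr>carrier := L\<rparr> Mod K)" and a: "a \<in> L" and b: "b \<in> L"
  shows "a \<otimes> b \<otimes> inv a \<otimes> inv b \<in> K"
proof -
  have LG: "L \<subseteq> carrier G" using L subgroup.subset by blast
  have aG: "a \<in> carrier G" and bG: "b \<in> carrier G" using a b LG by auto
  have ab: "a \<otimes> b \<in> L" and ba: "b \<otimes> a \<in> L" using subgroup.m_closed[OF L] a b by auto
  have xa: "K #> a \<in> carrier (G\<lparr>carrier := L\<rparr> Mod K)" and xb: "K #> b \<in> carrier (G\<lparr>carrier := L\<rparr> Mod K)"
    using a b quot_carrier by auto
  have "(K #> a) \<otimes>\<^bsub>G\<lparr>carrier := L\<rparr> Mod K\<^esub> (K #> b) = (K #> b) \<otimes>\<^bsub>G\<lparr>carrier := L\<rparr> Mod K\<^esub> (K #> a)"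
    using comm_groupE(4)[OF c xa xb] .
  then have "K #> (a \<otimes> b) = K #> (b \<otimes> a)" using quot_mult[OF L K a b] quot_mult[OF L K b a] by simp
  then have "(a \<otimes> b) \<otimes> inv (b \<otimes> a) \<in> K" using quot_eq_iff[OF L K ab ba] by simp
  moreover have "(a \<otimes> b) \<otimes> inv (b \<otimes> a) = a \<otimes> b \<otimes> inv a \<otimes> inv b"
    using aG bG by (simp add: inv_mult_group m_assoc)
  ultimately show ?thesis by simp
qed

lemma get15:
  assumes fin: "finite (carrier G)" and x: "x \<in> carrier G" and d3: "3 dvd ord x" and d5: "5 dvd ord x"
  shows "\<exists>y\<in>carrier G. ord y = 15"
proof -
  have d: "(15::nat) dvd ord x" using d3 d5 by presburger
  have pos: "ord x \<ge> 1" using ord_ge_1[OF fin x] .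
  define k where "k = ord x div 15"
  have k: "k dvd ord x" "k \<noteq> 0" using d pos unfolding k_def by auto
  have "ord (x [^] k) = ord x div k" using ord_pow[OF x k] .
  also have "\<dots> = 15" using d pos unfolding k_def by (metis dvd_div_eq_mult dvd_mult_div_cancel k(2) k_def mult.commute nonzero_mult_div_cancel_left)
  finally show ?thesis using x by blast
qed

end


context group begin

lemma conj_mult:
  assumes "g \<in> carrier G" "a \<in> carrier G" "b \<in> carrier G"
  shows "(g \<otimes> a \<otimes> inv g) \<otimes> (g \<otimes> b \<otimes> inv g) = g \<otimes> (a \<otimes> b) \<otimes> inv g"
  using assms by (simp add: m_assoc inv_solve_left')

lemma conj_inv:
  assumes "g \<in> carrier G" "a \<in> carrier G"
  shows "inv (g \<otimes> a \<otimes> inv g) = g \<otimes> inv a \<otimes> inv g"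
  using assms by (simp add: inv_mult_group m_assoc)

lemma conj_pow:
  assumes g: "g \<in> carrier G" and y: "y \<in> carrier G"
  shows "(g \<otimes> y \<otimes> inv g) [^] (n::nat) = g \<otimes> (y [^] n) \<otimes> inv g"
proof (induction n)
  case 0 then show ?case using g by simp
next
  case (Suc n) then show ?case using conj_mult[OF g nat_pow_closed[OF y, of n] y] g y by simp
qed

lemma conj_cancel:
  assumes g: "g \<in> carrier G" and a: "a \<in> carrier G" and b: "b \<in> carrier G"
    and e: "g \<otimes> a \<otimes> inv g = g \<otimes> b \<otimes> inv g"
  shows "a = b"
  using e a b g by (metis inv_closed m_closed l_cancel r_cancel)

lemma conj_subgroup:
  assumes K: "subgroup K G" and g: "g \<in> carrier G"
  shows "subgroup ((\<lambda>k. g \<otimes> k \<otimes> inv g) ` K) G"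
proof -
  have KG: "K \<subseteq> carrier G" using K subgroup.subset by blast
  show ?thesis
  proof (rule subgroupI)
    show "(\<lambda>k. g \<otimes> k \<otimes> inv g) ` K \<subseteq> carrier G" using KG g by auto
    show "(\<lambda>k. g \<otimes> k \<otimes> inv g) ` K \<noteq> {}" using subgroup.one_closed[OF K] by blast
    show "inv a \<in> (\<lambda>k. g \<otimes> k \<otimes> inv g) ` K" if aa: "a \<in> (\<lambda>k. g \<otimes> k \<otimes> inv g) ` K" for a
    proof -
      obtain k where k: "k \<in> K" "a = g \<otimes> k \<otimes> inv g" using aa by blast
      have "inv a = g \<otimes> inv k \<otimes> inv g" using conj_inv[OF g] k KG by auto
      then show ?thesis using subgroup.m_inv_closed[OF K k(1)] by blast
    qed
    show "a \<otimes> b \<in> (\<lambda>k. g \<otimes> k \<otimes> inv g) ` K"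
      if aa: "a \<in> (\<lambda>k. g \<otimes> k \<otimes> inv g) ` K" and bb: "b \<in> (\<lambda>k. g \<otimes> k \<otimes> inv g) ` K" for a b
    proof -
      obtain k where k: "k \<in> K" "a = g \<otimes> k \<otimes> inv g" using aa by blast
      obtain l where l: "l \<in> K" "b = g \<otimes> l \<otimes> inv g" using bb by blast
      have "a \<otimes> b = g \<otimes> (k \<otimes> l) \<otimes> inv g" using conj_mult[OF g] k l KG by auto
      then show ?thesis using subgroup.m_closed[OF K k(1) l(1)] by blast
    qed
  qed
qed

lemma quot_pow_iff:
  assumes L: "subgroup L G" and K: "K \<lhd> G\<lparr>carrier := L\<rparr>" and x: "x \<in> L" and y: "y \<in> L"
    and e: "K #> x = K #> y"
  shows "x [^] (n::nat) \<in> K \<longleftrightarrow> y [^] n \<in> K"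
proof -
  have "K #> (x [^] n) = K #> (y [^] n)" using quot_pow[OF L K x, of n] quot_pow[OF L K y, of n] e by simp
  then show ?thesis
    using quot_one_iff[OF L K sub_pow_closed[OF L x, of n]] quot_one_iff[OF L K sub_pow_closed[OF L y, of n]] by metis
qed

lemma preimage_normal:
  assumes L: "subgroup L G" and K: "K \<lhd> G\<lparr>carrier := L\<rparr>" and K': "K' \<lhd> G\<lparr>carrier := L\<rparr>"
  shows "{x \<in> L. \<exists>k'\<in>K'. K #> x = K #> k'} \<lhd> G\<lparr>carrier := L\<rparr>"
proof -
  let ?GL = "G\<lparr>carrier := L\<rparr>"
  let ?Q = "G\<lparr>carrier := L\<rparr> Mod K"
  let ?p = "\<lambda>a. K #> a"
  define Y where "Y = {x \<in> L. \<exists>k'\<in>K'. K #> x = K #> k'}"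
  interpret Q: group ?Q by (rule quot_group[OF L K])
  interpret h: group_hom ?GL ?Q ?p by (rule quot_hom[OF L K])
  have sK': "subgroup K' G" and K'L: "K' \<subseteq> L" using normal_sub_subgroup[OF L K'] by auto
  have LG: "L \<subseteq> carrier G" using L subgroup.subset by blast
  have YL: "Y \<subseteq> L" unfolding Y_def by blast
  have sY: "subgroup Y G"
  proof (rule subgroupI)
    show "Y \<subseteq> carrier G" using YL LG by blast
    show "Y \<noteq> {}"
    proof -
      have "\<one> \<in> L" "\<one> \<in> K'" using subgroup.one_closed[OF L] subgroup.one_closed[OF sK'] by auto
      then show ?thesis unfolding Y_def by blast
    qed
    show "inv a \<in> Y" if a: "a \<in> Y" for a
    proof -
      obtain k where aL: "a \<in> L" and k: "k \<in> K'" "K #> a = K #> k" using a unfolding Y_def by blast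
      have kL: "k \<in> L" using k K'L by blast
      have "?p (inv a) = inv\<^bsub>?Q\<^esub> (?p a)" using h.hom_inv[of a] aL m_inv_consistent[OF L aL] by simp
      also have "\<dots> = inv\<^bsub>?Q\<^esub> (?p k)" using k by simp
      also have "\<dots> = ?p (inv k)" using h.hom_inv[of k] kL m_inv_consistent[OF L kL] by simp
      finally show ?thesis using subgroup.m_inv_closed[OF L aL] subgroup.m_inv_closed[OF sK' k(1)]
        unfolding Y_def by blast
    qed
    show "a \<otimes> b \<in> Y" if a: "a \<in> Y" and b: "b \<in> Y" for a b
    proof -
      obtain k where aL: "a \<in> L" and k: "k \<in> K'" "K #> a = K #> k" using a unfolding Y_def by blast
      obtain l where bL: "b \<in> L" and l: "l \<in> K'" "K #> b = K #> l" using b unfolding Y_def by blast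
      have kL: "k \<in> L" and lL: "l \<in> L" using k l K'L by auto
      have "?p (a \<otimes> b) = ?p a \<otimes>\<^bsub>?Q\<^esub> ?p b" using h.hom_mult aL bL by simp
      also have "\<dots> = ?p k \<otimes>\<^bsub>?Q\<^esub> ?p l" using k l by simp
      also have "\<dots> = ?p (k \<otimes> l)" using h.hom_mult kL lL by simp
      finally show ?thesis using subgroup.m_closed[OF L aL bL] subgroup.m_closed[OF sK' k(1) l(1)]
        unfolding Y_def by blast
    qed
  qed
  have conj: "x \<otimes> a \<otimes> inv x \<in> Y" if x: "x \<in> L" and a: "a \<in> Y" for x a
  proof -
    obtain k where aL: "a \<in> L" and k: "k \<in> K'" "K #> a = K #> k" using a unfolding Y_def by blast
    have kL: "k \<in> L" using k K'L by blast
    have ixL: "inv x \<in> L" using subgroup.m_inv_closed[OF L x] .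
    have xa: "x \<otimes> a \<in> L" using subgroup.m_closed[OF L x aL] .
    have xk: "x \<otimes> k \<in> L" using subgroup.m_closed[OF L x kL] .
    have "?p (x \<otimes> a \<otimes> inv x) = ?p x \<otimes>\<^bsub>?Q\<^esub> ?p a \<otimes>\<^bsub>?Q\<^esub> ?p (inv x)"
      using h.hom_mult x aL xa ixL by simp
    also have "\<dots> = ?p x \<otimes>\<^bsub>?Q\<^esub> ?p k \<otimes>\<^bsub>?Q\<^esub> ?p (inv x)" using k by simp
    also have "\<dots> = ?p (x \<otimes> k \<otimes> inv x)" using h.hom_mult x kL xk ixL by simp
    finally have e: "?p (x \<otimes> a \<otimes> inv x) = ?p (x \<otimes> k \<otimes> inv x)" .
    have "x \<otimes> k \<otimes> inv x \<in> K'" using normal_sub_subgroup(3)[OF L K' x k(1)] .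
    moreover have "x \<otimes> a \<otimes> inv x \<in> L" using subgroup.m_closed[OF L xa ixL] .
    ultimately show ?thesis using e unfolding Y_def by blast
  qed
  show ?thesis unfolding Y_def[symmetric] using normal_sub_iff[OF L] sY YL conj by blast
qed

end


context group begin

lemma cancel_left_inv:
  "g \<in> carrier G \<Longrightarrow> z \<in> carrier G \<Longrightarrow> g \<otimes> (inv g \<otimes> z) = z"
  by (simp add: m_assoc[symmetric])

lemma chief_factor_A5:
  assumes fin: "finite (carrier G)" and ps: "pseudo_solvable G"
    and no15: "\<And>y. y \<in> carrier G \<Longrightarrow> ord y \<noteq> 15"
    and M: "M \<lhd> G" and N: "N \<lhd> G" and MN: "M \<subset> N"
    and minl: "\<And>T. T \<lhd> G \<Longrightarrow> M \<subseteq> T \<Longrightarrow> T \<subseteq> N \<Longrightarrow> T = M \<or> T = N"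
    and ns: "\<not> solvable (G\<lparr>carrier := N\<rparr> Mod M)"
  shows "G\<lparr>carrier := N\<rparr> Mod M \<cong> alt_group 5 \<and>
         (\<forall>T. T \<lhd> G\<lparr>carrier := N\<rparr> \<longrightarrow> M \<subseteq> T \<longrightarrow> T = M \<or> T = N) \<and>
         card N = 60 * card M \<and>
         (\<exists>a\<in>N. a [^] (3::nat) \<in> M \<and> a \<notin> M) \<and> (\<exists>b\<in>N. b [^] (5::nat) \<in> M \<and> b \<notin> M)"
proof -
  let ?GN = "G\<lparr>carrier := N\<rparr>"
  have sN: "subgroup N G" and sM: "subgroup M G" using M N normal_imp_subgroup by auto
  have NG: "N \<subseteq> carrier G" using sN subgroup.subset by blast
  have finN: "finite N" using fin NG finite_subset by blast
  have MnN: "M \<lhd> ?GN"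
    using normal_sub_iff[OF sN] sM MN normal.inv_op_closed2[OF M] NG by blast
  define S where "S = {T. T \<lhd> ?GN \<and> M \<subseteq> T \<and> T \<noteq> N}"
  have MS: "M \<in> S" using MnN MN unfolding S_def by blast
  have bound: "\<forall>T. T \<in> S \<longrightarrow> card T < Suc (card N)"
  proof (intro allI impI)
    fix T assume "T \<in> S"
    then have "T \<lhd> ?GN" unfolding S_def by blast
    then have "T \<subseteq> N" using normal_sub_subgroup(2)[OF sN] by blast
    then have "card T \<le> card N" using card_mono[OF finN] by blast
    then show "card T < Suc (card N)" by simp
  qed
  obtain K where KS: "K \<in> S" and Kmax: "\<forall>T. T \<in> S \<longrightarrow> card T \<le> card K"
    using ex_has_greatest_nat[of "\<lambda>T. T \<in> S" M card "Suc (card N)"] MS bound by blast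
  have Kn: "K \<lhd> ?GN" and MK: "M \<subseteq> K" and KN': "K \<noteq> N" using KS unfolding S_def by auto
  have KN: "K \<subseteq> N" and sK: "subgroup K G" using normal_sub_subgroup[OF sN Kn] by auto
  have KG: "K \<subseteq> carrier G" using KN NG by blast
  have maxK: "T = K \<or> T = N" if T: "T \<lhd> ?GN" and KT: "K \<subseteq> T" for T
  proof (rule ccontr)
    assume nt: "\<not> (T = K \<or> T = N)"
    then have "T \<in> S" using T KT MK unfolding S_def by blast
    then have "card T \<le> card K" using Kmax by blast
    moreover have "T \<subseteq> N" using normal_sub_subgroup(2)[OF sN T] .
    then have "finite T" using finN finite_subset by blast
    ultimately have "K = T" using card_seteq[OF _ KT] by blast
    then show False using nt by blast
  qed
  have simpK: "simple_group (?GN Mod K)"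
    by (rule max_normal_simple[OF sN Kn KN' fin maxK]) auto
  have triv: "{\<one>} \<lhd> G\<lparr>carrier := K\<rparr>"
    using normal_sub_iff[OF sK] triv_subgroup subgroup.one_closed[OF sK] KG by auto
  obtain H1 where H1: "cs_chain G H1" "hd H1 = {\<one>}" "last H1 = K"
    using chain_exists[OF fin sK triv] by blast
  have GG: "G\<lparr>carrier := carrier G\<rparr> = G" by simp
  have NnG: "N \<lhd> G\<lparr>carrier := carrier G\<rparr>" using N GG by simp
  obtain H2 where H2: "cs_chain G H2" "hd H2 = N" "last H2 = carrier G"
    using chain_exists[OF fin subgroup_self NnG] by blast
  have H1ne: "H1 \<noteq> []" and H2ne: "H2 \<noteq> []" using H1(1) H2(1) unfolding cs_chain_def by auto
  have "cs_chain G (H1 @ H2)" using cs_chain_append[OF H1(1) H2(1)] H1(3) H2(2) Kn simpK by simp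
  moreover have "hd (H1 @ H2) = {\<one>}" using H1ne H1(2) by simp
  moreover have "last (H1 @ H2) = carrier G" using H2ne H2(3) by simp
  ultimately have comp: "composition_series G (H1 @ H2)" using cs_chain_comp by blast
  define i0 where "i0 = length H1 - 1"
  have i0: "Suc i0 < length (H1 @ H2)" using H1ne H2ne unfolding i0_def by (cases H2) auto
  have "(H1 @ H2) ! i0 = K" using H1ne H1(3) unfolding i0_def by (simp add: nth_append last_conv_nth)
  moreover have "(H1 @ H2) ! Suc i0 = N" using H1ne H2ne H2(2) unfolding i0_def
    by (simp add: nth_append hd_conv_nth)
  ultimately have sf: "series_factor G (H1 @ H2) i0 = ?GN Mod K" unfolding series_factor_def by simp
  have cyc_or: "cyclic_group (?GN Mod K) \<or> ?GN Mod K \<cong> alt_group 5"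
    using ps comp i0 sf unfolding pseudo_solvable_def by metis
  define Cr where "Cr = {x \<in> N. \<forall>g\<in>carrier G. g \<otimes> x \<otimes> inv g \<in> K}"
  have XN: "Cr \<subseteq> N" unfolding Cr_def by blast
  have sX: "subgroup Cr G"
  proof (rule subgroupI)
    show "Cr \<subseteq> carrier G" using XN NG by blast
    show "Cr \<noteq> {}"
    proof -
      have "\<one> \<in> Cr" unfolding Cr_def using subgroup.one_closed[OF sN] subgroup.one_closed[OF sK] by auto
      then show ?thesis by blast
    qed
    show "inv a \<in> Cr" if a: "a \<in> Cr" for a
    proof -
      have aN: "a \<in> N" using a XN by blast
      have aG: "a \<in> carrier G" using aN NG by blast
      have "g \<otimes> inv a \<otimes> inv g \<in> K" if g: "g \<in> carrier G" for g
      proof -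
        have "g \<otimes> a \<otimes> inv g \<in> K" using a g unfolding Cr_def by blast
        then have "inv (g \<otimes> a \<otimes> inv g) \<in> K" using subgroup.m_inv_closed[OF sK] by blast
        then show ?thesis using conj_inv[OF g aG] by simp
      qed
      then show ?thesis unfolding Cr_def using subgroup.m_inv_closed[OF sN aN] by blast
    qed
    show "a \<otimes> b \<in> Cr" if a: "a \<in> Cr" and b: "b \<in> Cr" for a b
    proof -
      have aN: "a \<in> N" and bN: "b \<in> N" using a b XN by auto
      have aG: "a \<in> carrier G" and bG: "b \<in> carrier G" using aN bN NG by auto
      have "g \<otimes> (a \<otimes> b) \<otimes> inv g \<in> K" if g: "g \<in> carrier G" for g
      proof -
        have "g \<otimes> a \<otimes> inv g \<in> K" "g \<otimes> b \<otimes> inv g \<in> K" using a b g unfolding Cr_def by auto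
        then have "(g \<otimes> a \<otimes> inv g) \<otimes> (g \<otimes> b \<otimes> inv g) \<in> K" using subgroup.m_closed[OF sK] by blast
        then show ?thesis using conj_mult[OF g aG bG] by simp
      qed
      then show ?thesis unfolding Cr_def using subgroup.m_closed[OF sN aN bN] by blast
    qed
  qed
  have Xc: "h \<otimes> x \<otimes> inv h \<in> Cr" if h: "h \<in> carrier G" and x: "x \<in> Cr" for h x
  proof -
    have xN: "x \<in> N" using x XN by blast
    have xG: "x \<in> carrier G" using xN NG by blast
    have "g \<otimes> (h \<otimes> x \<otimes> inv h) \<otimes> inv g \<in> K" if g: "g \<in> carrier G" for g
    proof -
      have gh: "g \<otimes> h \<in> carrier G" using g h by simp
      have "(g \<otimes> h) \<otimes> x \<otimes> inv (g \<otimes> h) \<in> K" using x gh unfolding Cr_def by blast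
      moreover have "(g \<otimes> h) \<otimes> x \<otimes> inv (g \<otimes> h) = g \<otimes> (h \<otimes> x \<otimes> inv h) \<otimes> inv g"
        using g h xG by (simp add: inv_mult_group m_assoc)
      ultimately show ?thesis by simp
    qed
    moreover have "h \<otimes> x \<otimes> inv h \<in> N" using normal.inv_op_closed2[OF N h xN] .
    ultimately show ?thesis unfolding Cr_def by blast
  qed
  have XnG: "Cr \<lhd> G" using normal_inv_iff sX Xc by blast
  have MX: "M \<subseteq> Cr"
  proof
    fix x assume x: "x \<in> M"
    have "g \<otimes> x \<otimes> inv g \<in> K" if g: "g \<in> carrier G" for g
      using normal.inv_op_closed2[OF M g x] MK by blast
    then show "x \<in> Cr" unfolding Cr_def using x MN by blast
  qed
  have XK: "Cr \<subseteq> K"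
  proof
    fix x assume x: "x \<in> Cr"
    then have "\<one> \<otimes> x \<otimes> inv \<one> \<in> K" unfolding Cr_def by blast
    then show "x \<in> K" using x XN NG by auto
  qed
  have XM: "Cr = M" using minl[OF XnG MX XN] XK KN KN' by blast
  have notcyc: "\<not> cyclic_group (?GN Mod K)"
  proof
    assume "cyclic_group (?GN Mod K)"
    then have cK: "comm_group (?GN Mod K)"
      using group.cyclic_imp_abelian_group[OF quot_group[OF sN Kn]] by blast
    have "a \<otimes> b \<otimes> inv a \<otimes> inv b \<in> M" if a: "a \<in> N" and b: "b \<in> N" for a b
    proof -
      have aG: "a \<in> carrier G" and bG: "b \<in> carrier G" using a b NG by auto
      have "g \<otimes> (a \<otimes> b \<otimes> inv a \<otimes> inv b) \<otimes> inv g \<in> K" if g: "g \<in> carrier G" for g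
      proof -
        have a': "g \<otimes> a \<otimes> inv g \<in> N" and b': "g \<otimes> b \<otimes> inv g \<in> N"
          using normal.inv_op_closed2[OF N g] a b by auto
        have "(g \<otimes> a \<otimes> inv g) \<otimes> (g \<otimes> b \<otimes> inv g) \<otimes> inv (g \<otimes> a \<otimes> inv g) \<otimes> inv (g \<otimes> b \<otimes> inv g) \<in> K"
          using quot_comm_rev[OF sN Kn cK a' b'] .
        moreover have "(g \<otimes> a \<otimes> inv g) \<otimes> (g \<otimes> b \<otimes> inv g) \<otimes> inv (g \<otimes> a \<otimes> inv g) \<otimes> inv (g \<otimes> b \<otimes> inv g)
           = g \<otimes> (a \<otimes> b \<otimes> inv a \<otimes> inv b) \<otimes> inv g"
          using g aG bG by (simp add: conj_inv conj_mult)
        ultimately show ?thesis by simp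
      qed
      moreover have "a \<otimes> b \<otimes> inv a \<otimes> inv b \<in> N"
        using a b subgroup.m_closed[OF sN] subgroup.m_inv_closed[OF sN] by blast
      ultimately have "a \<otimes> b \<otimes> inv a \<otimes> inv b \<in> Cr" unfolding Cr_def by blast
      then show ?thesis using XM by simp
    qed
    then have "comm_group (?GN Mod M)" using quot_comm[OF sN MnN] by blast
    then show False using ns comm_solvable by blast
  qed
  have isoK: "?GN Mod K \<cong> alt_group 5" using cyc_or notcyc by blast
  have "2 * card (carrier (alt_group 5)) = fact 5" using alt_group_card_carrier[of 5] by simp
  then have c60: "card (carrier (alt_group 5)) = 60" by (simp add: fact_numeral)
  have oQ: "order (?GN Mod K) = 60" using iso_same_card[OF isoK] c60 unfolding order_def by simp
  interpret Q: group "?GN Mod K" by (rule quot_group[OF sN Kn])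
  have finQ: "finite (carrier (?GN Mod K))" using quot_carrier finN by simp
  have ex_elem: "\<exists>a\<in>N. a [^] p \<in> K \<and> a \<notin> K" if p: "Factorial_Ring.prime (p::nat)" "p dvd 60" for p
  proof -
    obtain u where u: "u \<in> carrier (?GN Mod K)" "u \<noteq> \<one>\<^bsub>?GN Mod K\<^esub>" "u [^]\<^bsub>?GN Mod K\<^esub> p = \<one>\<^bsub>?GN Mod K\<^esub>"
      using elem_prime[OF Q.is_group finQ p(1)] p(2) oQ by auto
    obtain a where a: "a \<in> N" "u = K #> a" using u(1) quot_carrier by blast
    have "K #> (a [^] p) = K" using u(3) a quot_pow[OF sN Kn a(1)] by simp
    then have "a [^] p \<in> K" using quot_one_iff[OF sN Kn sub_pow_closed[OF sN a(1)]] by simp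
    moreover have "a \<notin> K" using u(2) a quot_one_iff[OF sN Kn a(1)] by simp
    ultimately show ?thesis using a(1) by blast
  qed
  obtain a0 where a0: "a0 \<in> N" "a0 [^] (3::nat) \<in> K" "a0 \<notin> K" using ex_elem[of 3] by auto
  obtain b0 where b0: "b0 \<in> N" "b0 [^] (5::nat) \<in> K" "b0 \<notin> K" using ex_elem[of 5] by auto
  have KM: "K = M"
  proof (rule ccontr)
    assume "K \<noteq> M"
    then obtain k where kK: "k \<in> K" and kM: "k \<notin> M" using MK by blast
    then have "k \<notin> Cr" using XM by simp
    then obtain g where g: "g \<in> carrier G" and gk: "g \<otimes> k \<otimes> inv g \<notin> K"
      using kK KN unfolding Cr_def by blast
    define K' where "K' = (\<lambda>k. g \<otimes> k \<otimes> inv g) ` K"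
    have sK': "subgroup K' G" unfolding K'_def using conj_subgroup[OF sK g] .
    have K'N: "K' \<subseteq> N" unfolding K'_def using normal.inv_op_closed2[OF N g] KN by blast
    have K'c: "x \<otimes> h \<otimes> inv x \<in> K'" if x: "x \<in> N" and h: "h \<in> K'" for x h
    proof -
      obtain l where l: "l \<in> K" "h = g \<otimes> l \<otimes> inv g" using h unfolding K'_def by blast
      have lG: "l \<in> carrier G" using l KG by blast
      have xG: "x \<in> carrier G" using x NG by blast
      define y where "y = inv g \<otimes> x \<otimes> g"
      have yN: "y \<in> N" unfolding y_def using normal.inv_op_closed1[OF N g x] .
      have yG: "y \<in> carrier G" using yN NG by blast
      have "y \<otimes> l \<otimes> inv y \<in> K" using normal_sub_subgroup(3)[OF sN Kn yN l(1)] .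
      moreover have "x \<otimes> h \<otimes> inv x = g \<otimes> (y \<otimes> l \<otimes> inv y) \<otimes> inv g"
        unfolding y_def l(2) using g xG lG by (simp add: inv_mult_group m_assoc cancel_left_inv)
      ultimately show ?thesis unfolding K'_def by blast
    qed
    have K'n: "K' \<lhd> ?GN" using normal_sub_iff[OF sN] sK' K'N K'c by blast
    have K'mem: "g \<otimes> y \<otimes> inv g \<in> K' \<longleftrightarrow> y \<in> K" if y: "y \<in> carrier G" for y
    proof
      assume "g \<otimes> y \<otimes> inv g \<in> K'"
      then obtain l where l: "l \<in> K" "g \<otimes> y \<otimes> inv g = g \<otimes> l \<otimes> inv g" unfolding K'_def by blast
      then have "y = l" using conj_cancel[OF g y] KG by blast
      then show "y \<in> K" using l by simp
    qed (auto simp: K'_def)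
    define Y where "Y = {x \<in> N. \<exists>k'\<in>K'. K #> x = K #> k'}"
    have Yn: "Y \<lhd> ?GN" unfolding Y_def using preimage_normal[OF sN Kn K'n] .
    have KY: "K \<subseteq> Y"
    proof
      fix x assume x: "x \<in> K"
      have "\<one> \<in> K'" using subgroup.one_closed[OF sK'] .
      moreover have "K #> x = K #> \<one>"
      proof -
        have "x \<in> N" using x KN by blast
        then have "K #> x = K" using quot_one_iff[OF sN Kn] x by blast
        then show ?thesis using coset_mult_one[OF KG] by simp
      qed
      ultimately show "x \<in> Y" unfolding Y_def using x KN by blast
    qed
    have gkY: "g \<otimes> k \<otimes> inv g \<in> Y"
    proof -
      have m: "g \<otimes> k \<otimes> inv g \<in> K'" unfolding K'_def using kK by blast
      then show ?thesis unfolding Y_def using K'N by blast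
    qed
    have YN: "Y = N" using maxK[OF Yn KY] gkY gk by blast
    \<comment> \<open>the element of order 3 modulo K, inside K'\<close>
    obtain a' where a': "a' \<in> K'" "K #> a0 = K #> a'" using a0(1) YN unfolding Y_def by blast
    have a'N: "a' \<in> N" using a'(1) K'N by blast
    have a'G: "a' \<in> carrier G" using a'N NG by blast
    have a'pow: "a' [^] n \<in> K \<longleftrightarrow> a0 [^] n \<in> K" for n :: nat
      using quot_pow_iff[OF sN Kn a'N a0(1) a'(2)[symmetric]] .
    have a'3: "a' [^] (3::nat) \<in> K" using a'pow a0(2) by blast
    have a'K: "a' \<notin> K" using a'pow[of 1] a0(3) a'G a0(1) NG by auto
    \<comment> \<open>the element of order 5 modulo K', inside K\<close>
    define b1 where "b1 = g \<otimes> b0 \<otimes> inv g"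
    have b0G: "b0 \<in> carrier G" using b0(1) NG by blast
    have b1N: "b1 \<in> N" unfolding b1_def using normal.inv_op_closed2[OF N g b0(1)] .
    have b1G: "b1 \<in> carrier G" using b1N NG by blast
    have b1pow: "b1 [^] n \<in> K' \<longleftrightarrow> b0 [^] n \<in> K" for n :: nat
      unfolding b1_def using conj_pow[OF g b0G, of n] K'mem[of "b0 [^] n"] b0G by simp
    obtain k' where k': "k' \<in> K'" "K #> b1 = K #> k'" using b1N YN unfolding Y_def by blast
    have k'N: "k' \<in> N" using k'(1) K'N by blast
    have k'G: "k' \<in> carrier G" using k'N NG by blast
    define b' where "b' = b1 \<otimes> inv k'"
    have b'K: "b' \<in> K" unfolding b'_def using quot_eq_iff[OF sN Kn b1N k'N] k'(2) by blast
    have b'N: "b' \<in> N" using b'K KN by blast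
    have b'G: "b' \<in> carrier G" using b'N NG by blast
    have "b' \<otimes> inv b1 = b1 \<otimes> inv k' \<otimes> inv b1" unfolding b'_def by simp
    moreover have "b1 \<otimes> inv k' \<otimes> inv b1 \<in> K'"
      using normal_sub_subgroup(3)[OF sN K'n b1N subgroup.m_inv_closed[OF sK' k'(1)]] .
    ultimately have "b' \<otimes> inv b1 \<in> K'" by simp
    then have eb: "K' #> b' = K' #> b1" using quot_eq_iff[OF sN K'n b'N b1N] by simp
    have b'pow: "b' [^] n \<in> K' \<longleftrightarrow> b0 [^] n \<in> K" for n :: nat
      using quot_pow_iff[OF sN K'n b'N b1N eb] b1pow by simp
    \<comment> \<open>the product has order divisible by 15\<close>
    define x where "x = a' \<otimes> b'"
    have xG: "x \<in> carrier G" unfolding x_def using a'G b'G by simp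
    have x1: "x [^] n \<in> K \<longleftrightarrow> a' [^] n \<in> K" for n :: nat
      unfolding x_def using modpow_right[OF sN Kn b'K a'N] .
    have x2: "x [^] n \<in> K' \<longleftrightarrow> b' [^] n \<in> K'" for n :: nat
      unfolding x_def using modpow_left[OF sN K'n a'(1) b'N] .
    have xo: "x [^] ord x = \<one>" using pow_ord_eq_1[OF xG] .
    have "a' [^] ord x \<in> K" using x1 xo subgroup.one_closed[OF sK] by metis
    then have d3: "3 dvd ord x" using pow_in_prime[OF sK a'G _ a'3 a'K] by simp
    have "b' [^] ord x \<in> K'" using x2 xo subgroup.one_closed[OF sK'] by metis
    then have "b0 [^] ord x \<in> K" using b'pow by simp
    then have d5: "5 dvd ord x" using pow_in_prime[OF sK b0G _ b0(2) b0(3)] by simp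
    obtain y where "y \<in> carrier G" "ord y = 15" using get15[OF fin xG d3 d5] by blast
    then show False using no15 by blast
  qed
  have "order (?GN Mod M) * card M = card N" using quot_order[OF sN MnN fin] .
  then have "card N = 60 * card M" using oQ KM by simp
  then show ?thesis using isoK maxK a0 b0 KM by auto
qed

end


context group begin

lemma sol_ext:
  assumes A: "subgroup A G" and Bs: "subgroup Bs G" and n: "A \<lhd> G\<lparr>carrier := Bs\<rparr>"
    and sA: "solvable (G\<lparr>carrier := A\<rparr>)" and sQ: "solvable (G\<lparr>carrier := Bs\<rparr> Mod A)"
  shows "solvable (G\<lparr>carrier := Bs\<rparr>)"
proof -
  have AB: "A \<subseteq> Bs" using normal_sub_subgroup[OF Bs n] by blast
  have h1: "group_hom (G\<lparr>carrier := A\<rparr>) (G\<lparr>carrier := Bs\<rparr>) id"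
    using subgroup_imp_group[OF A] subgroup_imp_group[OF Bs] AB
    by (intro group_hom.intro group_hom_axioms.intro) (auto simp: hom_def)
  have h2: "group_hom (G\<lparr>carrier := Bs\<rparr>) (G\<lparr>carrier := Bs\<rparr> Mod A) (\<lambda>a. A #> a)"
    using quot_hom[OF Bs n] .
  have su: "(\<lambda>a. A #> a) ` carrier (G\<lparr>carrier := Bs\<rparr>) = carrier (G\<lparr>carrier := Bs\<rparr> Mod A)"
    using quot_carrier by simp
  have ke: "kernel (G\<lparr>carrier := Bs\<rparr>) (G\<lparr>carrier := Bs\<rparr> Mod A) (\<lambda>a. A #> a) \<subseteq> id ` carrier (G\<lparr>carrier := A\<rparr>)"
    using quot_one_iff[OF Bs n] by (auto simp: kernel_def)
  show ?thesis using solvable_condition[OF h1 h2 su ke sA sQ] .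
qed

lemma chief_facts:
  assumes cs: "chief_series G Ns"
  shows "\<And>i. i < length Ns \<Longrightarrow> Ns ! i \<lhd> G"
    and "\<And>i. Suc i < length Ns \<Longrightarrow> Ns ! i \<subset> Ns ! Suc i"
    and "\<And>i T. Suc i < length Ns \<Longrightarrow> T \<lhd> G \<Longrightarrow> Ns ! i \<subseteq> T \<Longrightarrow> T \<subseteq> Ns ! Suc i \<Longrightarrow> T = Ns ! i \<or> T = Ns ! Suc i"
    and "\<And>i j. i \<le> j \<Longrightarrow> j < length Ns \<Longrightarrow> Ns ! i \<subseteq> Ns ! j"
    and "Ns \<noteq> []" "Ns ! 0 = {\<one>}" "Ns ! (length Ns - 1) = carrier G"
proof -
  show n: "\<And>i. i < length Ns \<Longrightarrow> Ns ! i \<lhd> G" using cs unfolding chief_series_def by blast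
  show s: "\<And>i. Suc i < length Ns \<Longrightarrow> Ns ! i \<subset> Ns ! Suc i" using cs unfolding chief_series_def by blast
  show "\<And>i T. Suc i < length Ns \<Longrightarrow> T \<lhd> G \<Longrightarrow> Ns ! i \<subseteq> T \<Longrightarrow> T \<subseteq> Ns ! Suc i \<Longrightarrow> T = Ns ! i \<or> T = Ns ! Suc i"
    using cs unfolding chief_series_def by blast
  show "\<And>i j. i \<le> j \<Longrightarrow> j < length Ns \<Longrightarrow> Ns ! i \<subseteq> Ns ! j"
  proof -
    fix i j :: nat assume ij: "i \<le> j" and j: "j < length Ns"
    show "Ns ! i \<subseteq> Ns ! j" using ij j
    proof (induction j)
      case 0 then show ?case by simp
    next
      case (Suc j)
      show ?case
      proof (cases "i = Suc j")
        case True then show ?thesis by simp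
      next
        case False
        then have "i \<le> j" using Suc.prems by simp
        then have "Ns ! i \<subseteq> Ns ! j" using Suc by simp
        moreover have "Ns ! j \<subset> Ns ! Suc j" using s Suc.prems by blast
        ultimately show ?thesis by blast
      qed
    qed
  qed
  show ne: "Ns \<noteq> []" using cs unfolding chief_series_def by blast
  show "Ns ! 0 = {\<one>}" using cs ne unfolding chief_series_def by (simp add: hd_conv_nth)
  show "Ns ! (length Ns - 1) = carrier G" using cs ne unfolding chief_series_def by (simp add: last_conv_nth)
qed

lemma all_solvable:
  assumes cs: "chief_series G Ns"
    and sol: "\<And>i. Suc i < length Ns \<Longrightarrow> solvable (series_factor G Ns i)"
  shows "solvable G"
proof -
  note cf = chief_facts[OF cs]
  have "solvable (G\<lparr>carrier := Ns ! i\<rparr>)" if "i < length Ns" for i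
    using that
  proof (induction i)
    case 0
    have "solvable_seq (G\<lparr>carrier := {\<one>}\<rparr>) {\<one>\<^bsub>G\<lparr>carrier := {\<one>}\<rparr>\<^esub>}" by (rule solvable_seq.unity)
    then show ?case using cf(6) by (simp add: solvable_def)
  next
    case (Suc i)
    have iL: "i < length Ns" using Suc.prems by simp
    have si: "subgroup (Ns ! i) G" using normal_imp_subgroup[OF cf(1)[OF iL]] .
    have sSi: "subgroup (Ns ! Suc i) G" using normal_imp_subgroup[OF cf(1)[OF Suc.prems]] .
    have n: "Ns ! i \<lhd> G\<lparr>carrier := Ns ! Suc i\<rparr>"
      using normal_sub_iff[OF sSi] si cf(2)[OF Suc.prems] normal.inv_op_closed2[OF cf(1)[OF iL]]
        subgroup.subset[OF sSi] by auto
    show ?case using sol_ext[OF si sSi n] Suc sol[OF Suc.prems] unfolding series_factor_def by simp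
  qed
  from this[of "length Ns - 1"] show ?thesis using cf(5,7) by simp
qed

end


context group begin

lemma cancel_inv_left':
  "g \<in> carrier G \<Longrightarrow> z \<in> carrier G \<Longrightarrow> inv g \<otimes> (g \<otimes> z) = z"
  by (simp add: m_assoc[symmetric])

lemma comm_id1:
  assumes "z1 \<in> carrier G" "z2 \<in> carrier G" "y \<in> carrier G"
  shows "(z1 \<otimes> z2) \<otimes> y \<otimes> inv (z1 \<otimes> z2) \<otimes> inv y =
    (z1 \<otimes> (z2 \<otimes> y \<otimes> inv z2 \<otimes> inv y) \<otimes> inv z1) \<otimes> (z1 \<otimes> y \<otimes> inv z1 \<otimes> inv y)"
  using assms by (simp add: m_assoc inv_mult_group cancel_left_inv cancel_inv_left')

lemma comm_id2:
  assumes "z \<in> carrier G" "y \<in> carrier G"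
  shows "inv z \<otimes> y \<otimes> inv (inv z) \<otimes> inv y =
    inv (z \<otimes> (inv z \<otimes> y \<otimes> z) \<otimes> inv z \<otimes> inv (inv z \<otimes> y \<otimes> z))"
  using assms by (simp add: m_assoc inv_mult_group cancel_left_inv cancel_inv_left')

lemma comm_id3:
  assumes "h \<in> carrier G" "z \<in> carrier G" "y \<in> carrier G"
  shows "(h \<otimes> z \<otimes> inv h) \<otimes> y \<otimes> inv (h \<otimes> z \<otimes> inv h) \<otimes> inv y =
    h \<otimes> (z \<otimes> (inv h \<otimes> y \<otimes> h) \<otimes> inv z \<otimes> inv (inv h \<otimes> y \<otimes> h)) \<otimes> inv h"
  using assms by (simp add: m_assoc inv_mult_group cancel_left_inv cancel_inv_left')

lemma comm_id4:
  assumes "b \<in> carrier G" "y \<in> carrier G"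
  shows "b \<otimes> y \<otimes> inv b \<otimes> inv y = b \<otimes> (y \<otimes> inv b \<otimes> inv y)"
  using assms by (simp add: m_assoc)

lemma comm_id5:
  assumes "z \<in> carrier G" "y1 \<in> carrier G" "y2 \<in> carrier G"
  shows "z \<otimes> (y1 \<otimes> y2) \<otimes> inv z \<otimes> inv (y1 \<otimes> y2) =
    (z \<otimes> y1 \<otimes> inv z \<otimes> inv y1) \<otimes> (y1 \<otimes> (z \<otimes> y2 \<otimes> inv z \<otimes> inv y2) \<otimes> inv y1)"
  using assms by (simp add: m_assoc inv_mult_group cancel_left_inv cancel_inv_left')

lemma comm_id6:
  assumes "z \<in> carrier G" "y \<in> carrier G"
  shows "z \<otimes> inv y \<otimes> inv z \<otimes> inv (inv y) = inv y \<otimes> inv (z \<otimes> y \<otimes> inv z \<otimes> inv y) \<otimes> y"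
  using assms by (simp add: m_assoc inv_mult_group cancel_left_inv cancel_inv_left')

lemma comm_id7:
  assumes "a \<in> carrier G" "w \<in> carrier G"
  shows "(a \<otimes> w) \<otimes> inv (w \<otimes> a) = inv (w \<otimes> a \<otimes> inv w \<otimes> inv a)"
  using assms by (simp add: m_assoc inv_mult_group)

lemma comm_id8:
  assumes "g \<in> carrier G" "h \<in> carrier G" "a \<in> carrier G"
  shows "inv h \<otimes> ((g \<otimes> a \<otimes> inv g) \<otimes> inv (h \<otimes> a \<otimes> inv h)) \<otimes> h =
     (inv h \<otimes> g) \<otimes> a \<otimes> inv (inv h \<otimes> g) \<otimes> inv a"
  using assms by (simp add: m_assoc inv_mult_group cancel_left_inv cancel_inv_left')

end


context group begin

lemma rcos_eq_sub:
  assumes K: "subgroup K G" and a: "a \<in> carrier G" and b: "b \<in> carrier G"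
  shows "K #> a = K #> b \<longleftrightarrow> a \<otimes> inv b \<in> K"
proof
  assume "K #> a = K #> b"
  then have "a \<in> K #> b" using rcos_self[OF a K] by simp
  then show "a \<otimes> inv b \<in> K" using subgroup.rcos_module_imp[OF K is_group b] by blast
next
  assume "a \<otimes> inv b \<in> K"
  then have "a \<in> K #> b" using subgroup.rcos_module_rev[OF K is_group b a] by blast
  then show "K #> a = K #> b" using repr_independence[OF _ b K] by simp
qed

lemma rcosets_sub:
  "rcosets\<^bsub>G\<lparr>carrier := P\<rparr>\<^esub> H = (\<lambda>y. H #> y) ` P"
  by (auto simp: RCOSETS_def)

lemma idx_le:
  assumes fin: "finite (carrier G)" and P: "subgroup P G" and Q: "subgroup Q G"
  shows "card P * card Q \<le> order G * card (P \<inter> Q)"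
proof -
  let ?GP = "G\<lparr>carrier := P\<rparr>"
  interpret GP: group ?GP by (rule subgroup_imp_group[OF P])
  have PQ: "subgroup (P \<inter> Q) G" using subgroups_Inter_pair[OF P Q] .
  have PQP: "subgroup (P \<inter> Q) ?GP" using subgroup_incl[OF PQ P] by blast
  have l1: "card (rcosets\<^bsub>?GP\<^esub> (P \<inter> Q)) * card (P \<inter> Q) = card P"
    using GP.lagrange[OF PQP] by (simp add: order_def)
  have l2: "card (rcosets Q) * card Q = order G" using lagrange[OF Q] .
  have PG: "P \<subseteq> carrier G" using P subgroup.subset by blast
  define I where "I = (\<lambda>x. Q #> x) ` P"
  have IR: "I \<subseteq> rcosets Q" unfolding I_def RCOSETS_def using PG by blast
  have RP: "rcosets Q \<subseteq> Pow (carrier G)" using subgroup.rcosets_carrier[OF Q is_group] by blast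
  have finR: "finite (rcosets Q)" using finite_subset[OF RP] fin by simp
  have cI: "card I \<le> card (rcosets Q)" using card_mono[OF finR IR] .
  define f where "f = (\<lambda>v. (P \<inter> Q) #> (SOME x. x \<in> P \<and> Q #> x = v))"
  have "rcosets\<^bsub>?GP\<^esub> (P \<inter> Q) \<subseteq> f ` I"
  proof
    fix S assume "S \<in> rcosets\<^bsub>?GP\<^esub> (P \<inter> Q)"
    then obtain x where x: "x \<in> P" "S = (P \<inter> Q) #> x" using rcosets_sub by blast
    have ex: "\<exists>x'. x' \<in> P \<and> Q #> x' = Q #> x" using x by blast
    define x' where "x' = (SOME x'. x' \<in> P \<and> Q #> x' = Q #> x)"
    have x': "x' \<in> P" "Q #> x' = Q #> x" using someI_ex[OF ex] unfolding x'_def by auto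
    have xG: "x \<in> carrier G" and x'G: "x' \<in> carrier G" using x x' PG by auto
    have "x' \<otimes> inv x \<in> Q" using rcos_eq_sub[OF Q x'G xG] x'(2) by simp
    moreover have "x' \<otimes> inv x \<in> P" using subgroup.m_closed[OF P x'(1) subgroup.m_inv_closed[OF P x(1)]] .
    ultimately have "(P \<inter> Q) #> x' = (P \<inter> Q) #> x" using rcos_eq_sub[OF PQ x'G xG] by simp
    then have "f (Q #> x) = S" unfolding f_def x'_def[symmetric] using x by simp
    moreover have "Q #> x \<in> I" unfolding I_def using x by blast
    ultimately show "S \<in> f ` I" by blast
  qed
  moreover have "finite I" using finR IR finite_subset by blast
  ultimately have "card (rcosets\<^bsub>?GP\<^esub> (P \<inter> Q)) \<le> card I" by (rule surj_card_le[rotated])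
  then have c: "card (rcosets\<^bsub>?GP\<^esub> (P \<inter> Q)) \<le> card (rcosets Q)" using cI by simp
  have "card P * card Q = card (rcosets\<^bsub>?GP\<^esub> (P \<inter> Q)) * card (P \<inter> Q) * card Q" using l1 by simp
  also have "\<dots> \<le> card (rcosets Q) * card (P \<inter> Q) * card Q" using c by (simp add: mult_le_mono1)
  also have "\<dots> = order G * card (P \<inter> Q)" using l2 by (simp add: mult.commute mult.left_commute)
  finally show ?thesis .
qed

end


context group begin

lemma conj_prod:
  assumes "y \<in> carrier G" "z \<in> carrier G" "x \<in> carrier G"
  shows "y \<otimes> (z \<otimes> x \<otimes> inv z) \<otimes> inv y = (y \<otimes> z) \<otimes> x \<otimes> inv (y \<otimes> z)"
  using assms by (simp add: m_assoc inv_mult_group)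

lemma mult_inv_conj:
  assumes "y \<in> carrier G" "x \<in> carrier G" "x' \<in> carrier G"
  shows "(y \<otimes> x) \<otimes> inv (y \<otimes> x') = y \<otimes> (x \<otimes> inv x') \<otimes> inv y"
  using assms by (simp add: m_assoc inv_mult_group)

lemma mult_inv_cancel:
  assumes "y \<in> carrier G" "x \<in> carrier G" "y' \<in> carrier G"
  shows "(y \<otimes> x) \<otimes> inv (y' \<otimes> x) = y \<otimes> inv y'"
  using assms by (simp add: m_assoc inv_mult_group cancel_left_inv)

lemma no_small_index:
  assumes fin: "finite (carrier G)" and Aa: "subgroup Aa G" and Hh: "subgroup Hh G"
    and HA: "Hh \<subseteq> Aa" and ne: "Hh \<noteq> Aa"
    and Bn: "B \<lhd> G\<lparr>carrier := Aa\<rparr>" and BH: "B \<subseteq> Hh"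
    and maxB: "\<forall>T. T \<lhd> G\<lparr>carrier := Aa\<rparr> \<longrightarrow> B \<subseteq> T \<longrightarrow> T = B \<or> T = Aa"
    and m: "card Aa \<le> 4 * card Hh" and big: "24 * card B < card Aa"
  shows False
proof -
  let ?GA = "G\<lparr>carrier := Aa\<rparr>"
  interpret GA: group ?GA by (rule subgroup_imp_group[OF Aa])
  have AG: "Aa \<subseteq> carrier G" using Aa subgroup.subset by blast
  have HG: "Hh \<subseteq> carrier G" using Hh subgroup.subset by blast
  have finA: "finite Aa" using fin AG finite_subset by blast
  have HsA: "subgroup Hh ?GA" using subgroup_incl[OF Hh Aa HA] .
  define R where "R = (\<lambda>y. Hh #> y) ` Aa"
  have lR: "card R * card Hh = card Aa"
    using GA.lagrange[OF HsA] rcosets_sub[of Aa Hh] unfolding R_def by (simp add: order_def)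
  have finH: "finite Hh" using finA HA finite_subset by blast
  have cH: "card Hh > 0" using finH subgroup.one_closed[OF Hh] card_gt_0_iff by blast
  have cR: "card R \<le> 4"
  proof -
    have "card R * card Hh \<le> 4 * card Hh" using lR m by simp
    then show ?thesis using cH by simp
  qed
  have finR: "finite R" unfolding R_def using finA by simp
  define K0 where "K0 = {x \<in> Aa. \<forall>y\<in>Aa. y \<otimes> x \<otimes> inv y \<in> Hh}"
  have K0A: "K0 \<subseteq> Aa" unfolding K0_def by blast
  have sK0: "subgroup K0 G"
  proof (rule subgroupI)
    show "K0 \<subseteq> carrier G" using K0A AG by blast
    show "K0 \<noteq> {}"
    proof -
      have "\<one> \<in> K0" unfolding K0_def using subgroup.one_closed[OF Aa] subgroup.one_closed[OF Hh] AG by auto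
      then show ?thesis by blast
    qed
    show "inv a \<in> K0" if a: "a \<in> K0" for a
    proof -
      have aA: "a \<in> Aa" using a K0A by blast
      have aG: "a \<in> carrier G" using aA AG by blast
      have "y \<otimes> inv a \<otimes> inv y \<in> Hh" if y: "y \<in> Aa" for y
      proof -
        have yG: "y \<in> carrier G" using y AG by blast
        have "y \<otimes> a \<otimes> inv y \<in> Hh" using a y unfolding K0_def by blast
        then have "inv (y \<otimes> a \<otimes> inv y) \<in> Hh" using subgroup.m_inv_closed[OF Hh] by blast
        then show ?thesis using conj_inv[OF yG aG] by simp
      qed
      then show ?thesis unfolding K0_def using subgroup.m_inv_closed[OF Aa aA] by blast
    qed
    show "a \<otimes> b \<in> K0" if a: "a \<in> K0" and b: "b \<in> K0" for a b
    proof -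
      have aA: "a \<in> Aa" and bA: "b \<in> Aa" using a b K0A by auto
      have aG: "a \<in> carrier G" and bG: "b \<in> carrier G" using aA bA AG by auto
      have "y \<otimes> (a \<otimes> b) \<otimes> inv y \<in> Hh" if y: "y \<in> Aa" for y
      proof -
        have yG: "y \<in> carrier G" using y AG by blast
        have "y \<otimes> a \<otimes> inv y \<in> Hh" "y \<otimes> b \<otimes> inv y \<in> Hh" using a b y unfolding K0_def by auto
        then have "(y \<otimes> a \<otimes> inv y) \<otimes> (y \<otimes> b \<otimes> inv y) \<in> Hh" using subgroup.m_closed[OF Hh] by blast
        then show ?thesis using conj_mult[OF yG aG bG] by simp
      qed
      then show ?thesis unfolding K0_def using subgroup.m_closed[OF Aa aA bA] by blast
    qed
  qed
  have K0c: "z \<otimes> x \<otimes> inv z \<in> K0" if z: "z \<in> Aa" and x: "x \<in> K0" for z x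
  proof -
    have zG: "z \<in> carrier G" using z AG by blast
    have xA: "x \<in> Aa" using x K0A by blast
    have xG: "x \<in> carrier G" using xA AG by blast
    have "y \<otimes> (z \<otimes> x \<otimes> inv z) \<otimes> inv y \<in> Hh" if y: "y \<in> Aa" for y
    proof -
      have yG: "y \<in> carrier G" using y AG by blast
      have "(y \<otimes> z) \<otimes> x \<otimes> inv (y \<otimes> z) \<in> Hh" using x subgroup.m_closed[OF Aa y z] unfolding K0_def by blast
      then show ?thesis using conj_prod[OF yG zG xG] by simp
    qed
    moreover have "z \<otimes> x \<otimes> inv z \<in> Aa"
      using subgroup.m_closed[OF Aa subgroup.m_closed[OF Aa z xA] subgroup.m_inv_closed[OF Aa z]] .
    ultimately show ?thesis unfolding K0_def by blast
  qed
  have K0n: "K0 \<lhd> ?GA" using normal_sub_iff[OF Aa] sK0 K0A K0c by blast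
  have BK0: "B \<subseteq> K0"
  proof
    fix x assume x: "x \<in> B"
    have "y \<otimes> x \<otimes> inv y \<in> Hh" if y: "y \<in> Aa" for y
      using normal_sub_subgroup(3)[OF Aa Bn y x] BH by blast
    moreover have "x \<in> Aa" using x normal_sub_subgroup(2)[OF Aa Bn] by blast
    ultimately show "x \<in> K0" unfolding K0_def by blast
  qed
  have K0H: "K0 \<subseteq> Hh"
  proof
    fix x assume x: "x \<in> K0"
    then have "\<one> \<otimes> x \<otimes> inv \<one> \<in> Hh" using subgroup.one_closed[OF Aa] unfolding K0_def by blast
    then show "x \<in> Hh" using x K0A AG by auto
  qed
  have K0B: "K0 = B" using maxB K0n BK0 K0H HA ne by blast
  define \<sigma> where "\<sigma> = (\<lambda>x S. if S \<in> R then S #> x else S)"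
  have sig_R: "\<sigma> x (Hh #> y) = Hh #> (y \<otimes> x)" if x: "x \<in> Aa" and y: "y \<in> Aa" for x y
  proof -
    have "Hh #> y \<in> R" unfolding R_def using y by blast
    then show ?thesis unfolding \<sigma>_def using coset_mult_assoc[OF HG] x y AG by auto
  qed
  have perm: "\<sigma> x permutes R" if x: "x \<in> Aa" for x
  proof (rule bij_imp_permutes)
    have xG: "x \<in> carrier G" using x AG by blast
    have inj: "inj_on (\<sigma> x) R"
    proof (rule inj_onI)
      fix S S' assume S: "S \<in> R" and S': "S' \<in> R" and e: "\<sigma> x S = \<sigma> x S'"
      obtain y where y: "y \<in> Aa" "S = Hh #> y" using S unfolding R_def by blast
      obtain y' where y': "y' \<in> Aa" "S' = Hh #> y'" using S' unfolding R_def by blast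
      have yG: "y \<in> carrier G" and y'G: "y' \<in> carrier G" using y y' AG by auto
      have "Hh #> (y \<otimes> x) = Hh #> (y' \<otimes> x)" using e sig_R[OF x y(1)] sig_R[OF x y'(1)] y y' by simp
      then have "(y \<otimes> x) \<otimes> inv (y' \<otimes> x) \<in> Hh" using rcos_eq_sub[OF Hh] yG y'G xG by simp
      then have "y \<otimes> inv y' \<in> Hh" using mult_inv_cancel[OF yG xG y'G] by simp
      then show "S = S'" using rcos_eq_sub[OF Hh yG y'G] y y' by simp
    qed
    have img: "\<sigma> x ` R = R"
    proof
      show "\<sigma> x ` R \<subseteq> R"
      proof
        fix T assume "T \<in> \<sigma> x ` R"
        then obtain y where y: "y \<in> Aa" "T = \<sigma> x (Hh #> y)" unfolding R_def by blast
        then show "T \<in> R" using sig_R[OF x y(1)] subgroup.m_closed[OF Aa y(1) x] unfolding R_def by auto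
      qed
      show "R \<subseteq> \<sigma> x ` R"
      proof
        fix T assume "T \<in> R"
        then obtain y where y: "y \<in> Aa" "T = Hh #> y" unfolding R_def by blast
        have yx: "y \<otimes> inv x \<in> Aa" using subgroup.m_closed[OF Aa y(1) subgroup.m_inv_closed[OF Aa x]] .
        have yG: "y \<in> carrier G" using y AG by blast
        have "\<sigma> x (Hh #> (y \<otimes> inv x)) = Hh #> (y \<otimes> inv x \<otimes> x)" using sig_R[OF x yx] .
        also have "y \<otimes> inv x \<otimes> x = y" using yG xG by (simp add: m_assoc)
        finally have "\<sigma> x (Hh #> (y \<otimes> inv x)) = T" using y by simp
        moreover have "Hh #> (y \<otimes> inv x) \<in> R" unfolding R_def using yx by blast
        ultimately show "T \<in> \<sigma> x ` R" by blast
      qed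
    qed
    show "bij_betw (\<sigma> x) R R" using bij_betw_imageI[OF inj img] .
    show "\<sigma> x S = S" if "S \<notin> R" for S using that unfolding \<sigma>_def by simp
  qed
  have sig_eq: "x \<otimes> inv x' \<in> K0" if x: "x \<in> Aa" and x': "x' \<in> Aa" and e: "\<sigma> x = \<sigma> x'" for x x'
  proof -
    have xG: "x \<in> carrier G" and x'G: "x' \<in> carrier G" using x x' AG by auto
    have "y \<otimes> (x \<otimes> inv x') \<otimes> inv y \<in> Hh" if y: "y \<in> Aa" for y
    proof -
      have yG: "y \<in> carrier G" using y AG by blast
      have "Hh #> (y \<otimes> x) = Hh #> (y \<otimes> x')" using e sig_R[OF x y] sig_R[OF x' y] by simp
      then have "(y \<otimes> x) \<otimes> inv (y \<otimes> x') \<in> Hh" using rcos_eq_sub[OF Hh] yG xG x'G by simp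
      then show ?thesis using mult_inv_conj[OF yG xG x'G] by simp
    qed
    then show ?thesis unfolding K0_def using subgroup.m_closed[OF Aa x subgroup.m_inv_closed[OF Aa x']] by blast
  qed
  define f where "f = (\<lambda>p. K0 #> (SOME x. x \<in> Aa \<and> \<sigma> x = p))"
  have sub: "rcosets\<^bsub>?GA\<^esub> K0 \<subseteq> f ` (\<sigma> ` Aa)"
  proof
    fix S assume "S \<in> rcosets\<^bsub>?GA\<^esub> K0"
    then obtain x where x: "x \<in> Aa" "S = K0 #> x" using rcosets_sub by blast
    have ex: "\<exists>x'. x' \<in> Aa \<and> \<sigma> x' = \<sigma> x" using x by blast
    define x' where "x' = (SOME x'. x' \<in> Aa \<and> \<sigma> x' = \<sigma> x)"
    have x': "x' \<in> Aa" "\<sigma> x' = \<sigma> x" using someI_ex[OF ex] unfolding x'_def by auto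
    have xG: "x \<in> carrier G" and x'G: "x' \<in> carrier G" using x x' AG by auto
    have "x' \<otimes> inv x \<in> K0" using sig_eq[OF x'(1) x(1) x'(2)] .
    then have "K0 #> x' = K0 #> x" using rcos_eq_sub[OF sK0 x'G xG] by simp
    then have "f (\<sigma> x) = S" unfolding f_def x'_def[symmetric] using x by simp
    then show "S \<in> f ` (\<sigma> ` Aa)" using x by blast
  qed
  have permsub: "\<sigma> ` Aa \<subseteq> {p. p permutes R}" using perm by blast
  have finP: "finite {p. p permutes R}" using finite_permutations[OF finR] .
  have "card (rcosets\<^bsub>?GA\<^esub> K0) \<le> card (\<sigma> ` Aa)" using surj_card_le[OF _ sub] finA by simp
  also have "\<dots> \<le> card {p. p permutes R}" using card_mono[OF finP permsub] .
  also have "\<dots> = fact (card R)" using card_permutations[OF refl finR] .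
  also have "\<dots> \<le> fact 4" using cR fact_mono by blast
  also have "(fact 4 :: nat) = 24" by (simp add: fact_numeral)
  finally have c24: "card (rcosets\<^bsub>?GA\<^esub> K0) \<le> 24" .
  have K0sA: "subgroup K0 ?GA" using subgroup_incl[OF sK0 Aa K0A] .
  have "card (rcosets\<^bsub>?GA\<^esub> K0) * card K0 = card Aa" using GA.lagrange[OF K0sA] by (simp add: order_def)
  then have "card Aa \<le> 24 * card B" using c24 K0B by (metis mult_le_mono1)
  then show False using big by simp
qed

end


context group begin

lemma ord_prime_quot:
  assumes H: "group H" and u: "u \<in> carrier H" and p: "Factorial_Ring.prime (p::nat)"
    and up: "u [^]\<^bsub>H\<^esub> p = \<one>\<^bsub>H\<^esub>" and u1: "u \<noteq> \<one>\<^bsub>H\<^esub>"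
  shows "group.ord H u = p"
proof -
  interpret H: group H by (rule H)
  have "H.ord u dvd p" using H.pow_eq_id[OF u] up by simp
  moreover have "H.ord u \<noteq> 1" using H.ord_eq_1[OF u] u1 by simp
  ultimately show ?thesis using p prime_nat_iff by blast
qed

lemma two_A5_false:
  assumes fin: "finite (carrier G)" and no15: "\<And>y. y \<in> carrier G \<Longrightarrow> ord y \<noteq> 15"
    and B: "B \<lhd> G" and A: "A \<lhd> G" and D: "D \<lhd> G" and C: "C \<lhd> G"
    and BA: "B \<subseteq> A" and AD: "A \<subseteq> D" and DC: "D \<subseteq> C"
    and minA: "\<And>T. T \<lhd> G \<Longrightarrow> B \<subseteq> T \<Longrightarrow> T \<subseteq> A \<Longrightarrow> T = B \<or> T = A"
    and nsA: "\<not> solvable (G\<lparr>carrier := A\<rparr> Mod B)"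
    and maxB: "\<forall>T. T \<lhd> G\<lparr>carrier := A\<rparr> \<longrightarrow> B \<subseteq> T \<longrightarrow> T = B \<or> T = A"
    and cA: "card A = 60 * card B"
    and a: "a \<in> A" "a [^] (3::nat) \<in> B" "a \<notin> B"
    and b: "b \<in> A" "b [^] (5::nat) \<in> B" "b \<notin> B"
    and maxD: "\<forall>T. T \<lhd> G\<lparr>carrier := C\<rparr> \<longrightarrow> D \<subseteq> T \<longrightarrow> T = D \<or> T = C"
    and cC: "card C = 60 * card D"
    and c: "c \<in> C" "c [^] (5::nat) \<in> D" "c \<notin> D"
  shows False
proof -
  have sA: "subgroup A G" and sB: "subgroup B G" and sC: "subgroup C G" and sD: "subgroup D G"
    using A B C D normal_imp_subgroup by auto
  have AG: "A \<subseteq> carrier G" and CG: "C \<subseteq> carrier G" and DG: "D \<subseteq> carrier G" and BG: "B \<subseteq> carrier G"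
    using sA sC sD sB subgroup.subset by auto
  have aG: "a \<in> carrier G" and bG: "b \<in> carrier G" and cG: "c \<in> carrier G" using a b c AG CG by auto
  have BnA: "B \<lhd> G\<lparr>carrier := A\<rparr>"
    using normal_sub_iff[OF sA] sB BA normal.inv_op_closed2[OF B] AG by blast
  have DnC: "D \<lhd> G\<lparr>carrier := C\<rparr>"
    using normal_sub_iff[OF sC] sD DC normal.inv_op_closed2[OF D] CG by blast
  have finB: "finite B" using fin BG finite_subset by blast
  have cB: "card B > 0" using finB subgroup.one_closed[OF sB] card_gt_0_iff by blast
  define Z where "Z = {z \<in> carrier G. \<forall>y\<in>A. z \<otimes> y \<otimes> inv z \<otimes> inv y \<in> B}"
  have ZG: "Z \<subseteq> carrier G" unfolding Z_def by blast
  have sZ: "subgroup Z G"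
  proof (rule subgroupI)
    show "Z \<subseteq> carrier G" by (rule ZG)
    show "Z \<noteq> {}"
    proof -
      have "\<one> \<in> Z" unfolding Z_def using AG subgroup.one_closed[OF sB] by auto
      then show ?thesis by blast
    qed
    show "inv z \<in> Z" if z: "z \<in> Z" for z
    proof -
      have zG: "z \<in> carrier G" using z ZG by blast
      have "inv z \<otimes> y \<otimes> inv (inv z) \<otimes> inv y \<in> B" if y: "y \<in> A" for y
      proof -
        have yG: "y \<in> carrier G" using y AG by blast
        have y': "inv z \<otimes> y \<otimes> z \<in> A" using normal.inv_op_closed1[OF A zG y] .
        have "z \<otimes> (inv z \<otimes> y \<otimes> z) \<otimes> inv z \<otimes> inv (inv z \<otimes> y \<otimes> z) \<in> B" using z y' unfolding Z_def by blast
        then show ?thesis using comm_id2[OF zG yG] subgroup.m_inv_closed[OF sB] by simp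
      qed
      then show ?thesis unfolding Z_def using zG by simp
    qed
    show "z1 \<otimes> z2 \<in> Z" if z1: "z1 \<in> Z" and z2: "z2 \<in> Z" for z1 z2
    proof -
      have z1G: "z1 \<in> carrier G" and z2G: "z2 \<in> carrier G" using z1 z2 ZG by auto
      have "(z1 \<otimes> z2) \<otimes> y \<otimes> inv (z1 \<otimes> z2) \<otimes> inv y \<in> B" if y: "y \<in> A" for y
      proof -
        have yG: "y \<in> carrier G" using y AG by blast
        have "z2 \<otimes> y \<otimes> inv z2 \<otimes> inv y \<in> B" using z2 y unfolding Z_def by blast
        then have h1: "z1 \<otimes> (z2 \<otimes> y \<otimes> inv z2 \<otimes> inv y) \<otimes> inv z1 \<in> B" using normal.inv_op_closed2[OF B z1G] by blast
        have h2: "z1 \<otimes> y \<otimes> inv z1 \<otimes> inv y \<in> B" using z1 y unfolding Z_def by blast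
        show ?thesis using comm_id1[OF z1G z2G yG] subgroup.m_closed[OF sB h1 h2] by simp
      qed
      then show ?thesis unfolding Z_def using z1G z2G by simp
    qed
  qed
  have Zc: "h \<otimes> z \<otimes> inv h \<in> Z" if h: "h \<in> carrier G" and z: "z \<in> Z" for h z
  proof -
    have zG: "z \<in> carrier G" using z ZG by blast
    have "(h \<otimes> z \<otimes> inv h) \<otimes> y \<otimes> inv (h \<otimes> z \<otimes> inv h) \<otimes> inv y \<in> B" if y: "y \<in> A" for y
    proof -
      have yG: "y \<in> carrier G" using y AG by blast
      have y': "inv h \<otimes> y \<otimes> h \<in> A" using normal.inv_op_closed1[OF A h y] .
      have "z \<otimes> (inv h \<otimes> y \<otimes> h) \<otimes> inv z \<otimes> inv (inv h \<otimes> y \<otimes> h) \<in> B" using z y' unfolding Z_def by blast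
      then show ?thesis using comm_id3[OF h zG yG] normal.inv_op_closed2[OF B h] by simp
    qed
    then show ?thesis unfolding Z_def using h zG by simp
  qed
  have ZnG: "Z \<lhd> G" using normal_inv_iff sZ Zc by blast
  have BZ: "B \<subseteq> Z"
  proof
    fix x assume x: "x \<in> B"
    have xG: "x \<in> carrier G" using x BG by blast
    have "x \<otimes> y \<otimes> inv x \<otimes> inv y \<in> B" if y: "y \<in> A" for y
    proof -
      have yG: "y \<in> carrier G" using y AG by blast
      have "y \<otimes> inv x \<otimes> inv y \<in> B" using normal.inv_op_closed2[OF B yG subgroup.m_inv_closed[OF sB x]] .
      then show ?thesis using comm_id4[OF xG yG] subgroup.m_closed[OF sB x] by simp
    qed
    then show "x \<in> Z" unfolding Z_def using xG by simp
  qed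
  have AZ: "A \<inter> Z = B"
  proof -
    have "A \<inter> Z \<lhd> G"
      using normal_inv_iff subgroups_Inter_pair[OF sA sZ] normal.inv_op_closed2[OF A] Zc by auto
    then have "A \<inter> Z = B \<or> A \<inter> Z = A" using minA BA BZ by blast
    moreover have "A \<inter> Z \<noteq> A"
    proof
      assume "A \<inter> Z = A"
      then have "A \<subseteq> Z" by blast
      then have "y \<otimes> x \<otimes> inv y \<otimes> inv x \<in> B" if "y \<in> A" "x \<in> A" for x y using that unfolding Z_def by blast
      then have "comm_group (G\<lparr>carrier := A\<rparr> Mod B)" using quot_comm[OF sA BnA] by blast
      then show False using nsA comm_solvable by blast
    qed
    ultimately show ?thesis by blast
  qed
  \<comment> \<open>A/B is generated by a and b\<close>
  have gen: "z \<in> Z" if z: "z \<in> carrier G" and za: "z \<otimes> a \<otimes> inv z \<otimes> inv a \<in> B"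
    and zb: "z \<otimes> b \<otimes> inv z \<otimes> inv b \<in> B" for z
  proof -
    define Cz where "Cz = {y \<in> A. z \<otimes> y \<otimes> inv z \<otimes> inv y \<in> B}"
    have CzA: "Cz \<subseteq> A" unfolding Cz_def by blast
    have sCz: "subgroup Cz G"
    proof (rule subgroupI)
      show "Cz \<subseteq> carrier G" using CzA AG by blast
      show "Cz \<noteq> {}" using a za unfolding Cz_def by blast
      show "inv y \<in> Cz" if y: "y \<in> Cz" for y
      proof -
        have yA: "y \<in> A" using y CzA by blast
        have yG: "y \<in> carrier G" using yA AG by blast
        have "z \<otimes> y \<otimes> inv z \<otimes> inv y \<in> B" using y unfolding Cz_def by blast
        then have "inv y \<otimes> inv (z \<otimes> y \<otimes> inv z \<otimes> inv y) \<otimes> y \<in> B"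
          using normal.inv_op_closed1[OF B yG] subgroup.m_inv_closed[OF sB] by blast
        then have "z \<otimes> inv y \<otimes> inv z \<otimes> inv (inv y) \<in> B" using comm_id6[OF z yG] by simp
        then show ?thesis unfolding Cz_def using subgroup.m_inv_closed[OF sA yA] by blast
      qed
      show "y1 \<otimes> y2 \<in> Cz" if y1: "y1 \<in> Cz" and y2: "y2 \<in> Cz" for y1 y2
      proof -
        have y1A: "y1 \<in> A" and y2A: "y2 \<in> A" using y1 y2 CzA by auto
        have y1G: "y1 \<in> carrier G" and y2G: "y2 \<in> carrier G" using y1A y2A AG by auto
        have h1: "z \<otimes> y1 \<otimes> inv z \<otimes> inv y1 \<in> B" using y1 unfolding Cz_def by blast
        have "z \<otimes> y2 \<otimes> inv z \<otimes> inv y2 \<in> B" using y2 unfolding Cz_def by blast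
        then have h2: "y1 \<otimes> (z \<otimes> y2 \<otimes> inv z \<otimes> inv y2) \<otimes> inv y1 \<in> B" using normal.inv_op_closed2[OF B y1G] by blast
        have "z \<otimes> (y1 \<otimes> y2) \<otimes> inv z \<otimes> inv (y1 \<otimes> y2) \<in> B"
          using comm_id5[OF z y1G y2G] subgroup.m_closed[OF sB h1 h2] by simp
        then show ?thesis unfolding Cz_def using subgroup.m_closed[OF sA y1A y2A] by blast
      qed
    qed
    have BCz: "B \<subseteq> Cz"
    proof
      fix x assume x: "x \<in> B"
      have xG: "x \<in> carrier G" using x BG by blast
      have "z \<otimes> x \<otimes> inv z \<in> B" using normal.inv_op_closed2[OF B z x] .
      then have "z \<otimes> x \<otimes> inv z \<otimes> inv x \<in> B" using subgroup.m_closed[OF sB _ subgroup.m_inv_closed[OF sB x]] by blast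
      then show "x \<in> Cz" unfolding Cz_def using x BA by blast
    qed
    have aCz: "a \<in> Cz" and bCz: "b \<in> Cz" unfolding Cz_def using a b za zb by auto
    have CzEq: "Cz = A"
    proof (rule ccontr)
      assume ne: "Cz \<noteq> A"
      let ?QH = "G\<lparr>carrier := Cz\<rparr> Mod B"
      have BnCz: "B \<lhd> G\<lparr>carrier := Cz\<rparr>"
        using normal_sub_iff[OF sCz] sB BCz normal.inv_op_closed2[OF B] CzA AG by blast
      interpret QH: group ?QH by (rule quot_group[OF sCz BnCz])
      have oQH: "order ?QH * card B = card Cz" using quot_order[OF sCz BnCz fin] .
      have dvd_p: "p dvd order ?QH"
        if p: "Factorial_Ring.prime (p::nat)" and x: "x \<in> Cz" "x [^] p \<in> B" "x \<notin> B" for p x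
      proof -
        have u: "B #> x \<in> carrier ?QH" using quot_carrier x(1) by blast
        have "(B #> x) [^]\<^bsub>?QH\<^esub> p = B #> (x [^] p)" using quot_pow[OF sCz BnCz x(1)] .
        also have "\<dots> = B" using quot_one_iff[OF sCz BnCz sub_pow_closed[OF sCz x(1)]] x(2) by simp
        finally have up: "(B #> x) [^]\<^bsub>?QH\<^esub> p = \<one>\<^bsub>?QH\<^esub>" by simp
        have u1: "B #> x \<noteq> \<one>\<^bsub>?QH\<^esub>" using quot_one_iff[OF sCz BnCz x(1)] x(3) by simp
        have "QH.ord (B #> x) = p" using ord_prime_quot[OF QH.is_group u p up u1] .
        then show ?thesis using QH.ord_dvd_group_order[OF u] by simp
      qed
      have d3: "3 dvd order ?QH" using dvd_p[of 3 a] aCz a by simp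
      have d5: "5 dvd order ?QH" using dvd_p[of 5 b] bCz b by simp
      have d15: "15 dvd order ?QH" using d3 d5 by presburger
      then obtain t where t: "order ?QH = 15 * t" by blast
      interpret GA: group "G\<lparr>carrier := A\<rparr>" by (rule subgroup_imp_group[OF sA])
      have CzsA: "subgroup Cz (G\<lparr>carrier := A\<rparr>)" using subgroup_incl[OF sCz sA CzA] .
      define r where "r = card (rcosets\<^bsub>G\<lparr>carrier := A\<rparr>\<^esub> Cz)"
      have lr: "r * card Cz = card A" using GA.lagrange[OF CzsA] unfolding r_def by (simp add: order_def)
      have "r * (15 * t) * card B = 60 * card B" using lr oQH t cA by (simp add: mult.assoc)
      then have "r * (15 * t) = 60" using cB by simp
      then have rt: "r * t = 4" by simp
      have t0: "t \<noteq> 0"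
      proof
        assume "t = 0"
        then show False using rt by simp
      qed
      have "r \<le> r * t" using t0 by simp
      then have r4: "r \<le> 4" using rt by simp
      have m: "card A \<le> 4 * card Cz" using lr r4 by (metis mult_le_mono1)
      have big: "24 * card B < card A" using cA cB by simp
      show False using no_small_index[OF fin sA sCz CzA ne BnA BCz maxB m big] .
    qed
    show ?thesis unfolding Z_def using z CzEq unfolding Cz_def by blast
  qed
  show False
  proof (cases "C \<inter> Z \<subseteq> D")
    case False
    then obtain w0 where w0: "w0 \<in> C" "w0 \<in> Z" "w0 \<notin> D" by blast
    define W where "W = C \<inter> Z"
    have sW: "subgroup W G" unfolding W_def using subgroups_Inter_pair[OF sC sZ] .
    have WnC: "W \<lhd> G\<lparr>carrier := C\<rparr>"
      using normal_sub_iff[OF sC] sW normal.inv_op_closed2[OF C] Zc CG unfolding W_def by auto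
    define V where "V = {x \<in> C. \<exists>w\<in>W. D #> x = D #> w}"
    have Vn: "V \<lhd> G\<lparr>carrier := C\<rparr>" unfolding V_def using preimage_normal[OF sC DnC WnC] .
    have DV: "D \<subseteq> V"
    proof
      fix x assume x: "x \<in> D"
      have xC: "x \<in> C" using x DC by blast
      have "\<one> \<in> W" using subgroup.one_closed[OF sW] .
      moreover have "D #> x = D #> \<one>"
      proof -
        have "D #> x = D" using quot_one_iff[OF sC DnC xC] x by blast
        then show ?thesis using coset_mult_one[OF DG] by simp
      qed
      ultimately show "x \<in> V" unfolding V_def using xC by blast
    qed
    have "w0 \<in> V" unfolding V_def W_def using w0 by blast
    then have VC: "V = C" using maxD Vn DV w0(3) by blast
    obtain w where w: "w \<in> W" "D #> c = D #> w" using c(1) VC unfolding V_def by blast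
    have wC: "w \<in> C" and wZ: "w \<in> Z" using w(1) unfolding W_def by auto
    have wG: "w \<in> carrier G" using wC CG by blast
    have wpow: "w [^] n \<in> D \<longleftrightarrow> c [^] n \<in> D" for n :: nat
      using quot_pow_iff[OF sC DnC wC c(1) w(2)[symmetric]] .
    have aD: "a \<in> D" using a(1) AD by blast
    define x where "x = a \<otimes> w"
    have xG: "x \<in> carrier G" unfolding x_def using aG wG by simp
    have xD: "x [^] n \<in> D \<longleftrightarrow> w [^] n \<in> D" for n :: nat
      unfolding x_def using modpow_left[OF sC DnC aD wC] .
    let ?GG = "G\<lparr>carrier := carrier G\<rparr>"
    let ?QG = "?GG Mod B"
    have BnG: "B \<lhd> ?GG" using normal_sub_iff[OF subgroup_self] sB BG normal.inv_op_closed2[OF B] by blast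
    interpret QG: group ?QG by (rule quot_group[OF subgroup_self BnG])
    have pa: "B #> a \<in> carrier ?QG" and pw: "B #> w \<in> carrier ?QG" unfolding quot_carrier using aG wG by blast+
    have "w \<otimes> a \<otimes> inv w \<otimes> inv a \<in> B" using wZ a(1) unfolding Z_def by blast
    then have "(a \<otimes> w) \<otimes> inv (w \<otimes> a) \<in> B" using comm_id7[OF aG wG] subgroup.m_inv_closed[OF sB] by simp
    then have "B #> (a \<otimes> w) = B #> (w \<otimes> a)" using quot_eq_iff[OF subgroup_self BnG] aG wG by simp
    then have com: "(B #> a) \<otimes>\<^bsub>?QG\<^esub> (B #> w) = (B #> w) \<otimes>\<^bsub>?QG\<^esub> (B #> a)"
      using quot_mult[OF subgroup_self BnG aG wG] quot_mult[OF subgroup_self BnG wG aG] by simp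
    have xB: "a [^] n \<in> B" if xn: "x [^] n \<in> B" for n :: nat
    proof -
      have an: "a [^] n \<in> carrier G" and wn: "w [^] n \<in> carrier G" using aG wG by auto
      have "B #> (x [^] n) = (B #> x) [^]\<^bsub>?QG\<^esub> n" using quot_pow[OF subgroup_self BnG xG] by simp
      also have "B #> x = (B #> a) \<otimes>\<^bsub>?QG\<^esub> (B #> w)" unfolding x_def using quot_mult[OF subgroup_self BnG aG wG] by simp
      also have "((B #> a) \<otimes>\<^bsub>?QG\<^esub> (B #> w)) [^]\<^bsub>?QG\<^esub> n = (B #> a) [^]\<^bsub>?QG\<^esub> n \<otimes>\<^bsub>?QG\<^esub> (B #> w) [^]\<^bsub>?QG\<^esub> n"
        using QG.pow_mult_distrib[OF com pa pw] .
      also have "\<dots> = (B #> (a [^] n)) \<otimes>\<^bsub>?QG\<^esub> (B #> (w [^] n))"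
        using quot_pow[OF subgroup_self BnG aG] quot_pow[OF subgroup_self BnG wG] by simp
      also have "\<dots> = B #> (a [^] n \<otimes> w [^] n)" using quot_mult[OF subgroup_self BnG an wn] by simp
      finally have e: "B #> (x [^] n) = B #> (a [^] n \<otimes> w [^] n)" .
      have "B #> (x [^] n) = B" using quot_one_iff[OF subgroup_self BnG] xG xn by simp
      then have "B #> (a [^] n \<otimes> w [^] n) = B" using e by simp
      then have anwn: "a [^] n \<otimes> w [^] n \<in> B" using quot_one_iff[OF subgroup_self BnG] an wn by simp
      have wnZ: "w [^] n \<in> Z" using sub_pow_closed[OF sZ wZ] .
      have "a [^] n = (a [^] n \<otimes> w [^] n) \<otimes> inv (w [^] n)" using an wn by (simp add: m_assoc)
      moreover have "(a [^] n \<otimes> w [^] n) \<otimes> inv (w [^] n) \<in> Z"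
        using subgroup.m_closed[OF sZ _ subgroup.m_inv_closed[OF sZ wnZ]] anwn BZ by blast
      ultimately have "a [^] n \<in> Z" by simp
      moreover have "a [^] n \<in> A" using sub_pow_closed[OF sA a(1)] .
      ultimately show ?thesis using AZ by blast
    qed
    have xo: "x [^] ord x = \<one>" using pow_ord_eq_1[OF xG] .
    have "a [^] ord x \<in> B" using xB xo subgroup.one_closed[OF sB] by simp
    then have d3: "3 dvd ord x" using pow_in_prime[OF sB aG _ a(2) a(3)] by simp
    have "w [^] ord x \<in> D" using xD xo subgroup.one_closed[OF sD] by metis
    then have "c [^] ord x \<in> D" using wpow by simp
    then have d5: "5 dvd ord x" using pow_in_prime[OF sD cG _ c(2) c(3)] by simp
    obtain y where "y \<in> carrier G" "ord y = 15" using get15[OF fin xG d3 d5] by blast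
    then show False using no15 by blast
  next
    case True
    have sCZ: "subgroup (C \<inter> Z) G" using subgroups_Inter_pair[OF sC sZ] .
    have i1: "card C * card Z \<le> order G * card (C \<inter> Z)" using idx_le[OF fin sC sZ] by simp
    interpret GD: group "G\<lparr>carrier := D\<rparr>" by (rule subgroup_imp_group[OF sD])
    have finD: "finite (carrier (G\<lparr>carrier := D\<rparr>))" using fin DG finite_subset by auto
    have AsD: "subgroup A (G\<lparr>carrier := D\<rparr>)" using subgroup_incl[OF sA sD AD] .
    have CZsD: "subgroup (C \<inter> Z) (G\<lparr>carrier := D\<rparr>)" using subgroup_incl[OF sCZ sD True] .
    have "card A * card (C \<inter> Z) \<le> order (G\<lparr>carrier := D\<rparr>) * card (A \<inter> (C \<inter> Z))"
      using GD.idx_le[OF finD AsD CZsD] .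
    moreover have "A \<inter> (C \<inter> Z) = B" using AZ AD DC by blast
    ultimately have i2: "card A * card (C \<inter> Z) \<le> card D * card B" by (simp add: order_def)
    \<comment> \<open>upper bound for the index of Z\<close>
    let ?QA = "G\<lparr>carrier := A\<rparr> Mod B"
    have oQA: "order ?QA * card B = card A" using quot_order[OF sA BnA fin] .
    then have oQA60: "card (carrier ?QA) = 60" using cA cB unfolding order_def by simp
    have BQA: "B \<in> carrier ?QA"
    proof -
      have e: "B #> \<one> = B" using coset_mult_one[OF BG] .
      have "B #> \<one> \<in> (\<lambda>x. B #> x) ` A" using subgroup.one_closed[OF sA] by blast
      then show ?thesis unfolding quot_carrier using e by simp
    qed
    define V0 where "V0 = carrier ?QA - {B}"
    have finA: "finite A" using fin AG finite_subset by blast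
    have finQA: "finite (carrier ?QA)" unfolding quot_carrier using finA by simp
    have cV0: "card V0 = 59" unfolding V0_def using oQA60 BQA finQA by (simp add: card_Diff_singleton)
    define \<phi> where "\<phi> = (\<lambda>g. (B #> (g \<otimes> a \<otimes> inv g), B #> (g \<otimes> b \<otimes> inv g)))"
    have phiV: "\<phi> ` carrier G \<subseteq> V0 \<times> V0"
    proof
      fix v assume "v \<in> \<phi> ` carrier G"
      then obtain g where g: "g \<in> carrier G" "v = \<phi> g" by blast
      have inV0: "B #> (g \<otimes> y \<otimes> inv g) \<in> V0" if y: "y \<in> A" "y \<notin> B" for y
      proof -
        have yG: "y \<in> carrier G" using y AG by blast
        have gy: "g \<otimes> y \<otimes> inv g \<in> A" using normal.inv_op_closed2[OF A g(1) y(1)] .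
        have "B #> (g \<otimes> y \<otimes> inv g) \<in> carrier ?QA" using quot_carrier gy by blast
        moreover have "B #> (g \<otimes> y \<otimes> inv g) \<noteq> B"
        proof
          assume "B #> (g \<otimes> y \<otimes> inv g) = B"
          then have "g \<otimes> y \<otimes> inv g \<in> B" using quot_one_iff[OF sA BnA gy] by simp
          then have "inv g \<otimes> (g \<otimes> y \<otimes> inv g) \<otimes> g \<in> B" using normal.inv_op_closed1[OF B g(1)] by blast
          then have "y \<in> B" using g(1) yG by (simp add: m_assoc cancel_inv_left')
          then show False using y(2) by blast
        qed
        ultimately show ?thesis unfolding V0_def by blast
      qed
      show "v \<in> V0 \<times> V0" using g inV0[OF a(1) a(3)] inV0[OF b(1) b(3)] unfolding \<phi>_def by simp
    qed
    have finV: "finite (V0 \<times> V0)" using finQA unfolding V0_def by simp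
    have cphi: "card (\<phi> ` carrier G) \<le> 3481"
      using card_mono[OF finV phiV] cV0 by (simp add: card_cartesian_product)
    define f where "f = (\<lambda>v. Z #> (SOME g. g \<in> carrier G \<and> \<phi> g = v))"
    have sub: "rcosets Z \<subseteq> f ` (\<phi> ` carrier G)"
    proof
      fix S assume "S \<in> rcosets Z"
      then obtain g where g: "g \<in> carrier G" "S = Z #> g" unfolding RCOSETS_def by blast
      have ex: "\<exists>g'. g' \<in> carrier G \<and> \<phi> g' = \<phi> g" using g by blast
      define g' where "g' = (SOME g'. g' \<in> carrier G \<and> \<phi> g' = \<phi> g)"
      have g': "g' \<in> carrier G" "\<phi> g' = \<phi> g" using someI_ex[OF ex] unfolding g'_def by auto
      have cen: "(inv g \<otimes> g') \<otimes> y \<otimes> inv (inv g \<otimes> g') \<otimes> inv y \<in> B"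
        if y: "y \<in> A" and e: "B #> (g' \<otimes> y \<otimes> inv g') = B #> (g \<otimes> y \<otimes> inv g)" for y
      proof -
        have yG: "y \<in> carrier G" using y AG by blast
        have y1: "g' \<otimes> y \<otimes> inv g' \<in> A" using normal.inv_op_closed2[OF A g'(1) y] .
        have y2: "g \<otimes> y \<otimes> inv g \<in> A" using normal.inv_op_closed2[OF A g(1) y] .
        have "(g' \<otimes> y \<otimes> inv g') \<otimes> inv (g \<otimes> y \<otimes> inv g) \<in> B" using quot_eq_iff[OF sA BnA y1 y2] e by simp
        then have "inv g \<otimes> ((g' \<otimes> y \<otimes> inv g') \<otimes> inv (g \<otimes> y \<otimes> inv g)) \<otimes> g \<in> B"
          using normal.inv_op_closed1[OF B g(1)] by blast
        then show ?thesis using comm_id8[OF g'(1) g(1) yG] by simp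
      qed
      have zdef: "inv g \<otimes> g' \<in> carrier G" using g g' by simp
      have "inv g \<otimes> g' \<in> Z"
        using gen[OF zdef] cen[OF a(1)] cen[OF b(1)] g'(2) unfolding \<phi>_def by simp
      then have "g \<otimes> (inv g \<otimes> g') \<otimes> inv g \<in> Z" using Zc g(1) by blast
      then have "g' \<otimes> inv g \<in> Z" using g g' by (simp add: m_assoc cancel_left_inv)
      then have "Z #> g' = Z #> g" using rcos_eq_sub[OF sZ g'(1) g(1)] by simp
      then have "f (\<phi> g) = S" unfolding f_def g'_def[symmetric] using g by simp
      then show "S \<in> f ` (\<phi> ` carrier G)" using g by blast
    qed
    have "card (rcosets Z) \<le> card (\<phi> ` carrier G)" using surj_card_le[OF _ sub] fin by simp
    then have r3481: "card (rcosets Z) \<le> 3481" using cphi by simp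
    have lZ: "card (rcosets Z) * card Z = order G" using lagrange[OF sZ] .
    have finZ: "finite Z" using fin ZG finite_subset by blast
    have cZ: "card Z > 0" using finZ subgroup.one_closed[OF sZ] card_gt_0_iff by blast
    have finCZ: "finite (C \<inter> Z)" using finZ by simp
    have cCZ: "card (C \<inter> Z) > 0" using finCZ subgroup.one_closed[OF sCZ] card_gt_0_iff by blast
    have u: "order G \<le> 3481 * card Z" using lZ r3481 by (metis mult_le_mono1)
    have i2': "60 * card (C \<inter> Z) \<le> card D" using i2 cA cB by (simp add: mult.commute mult.left_commute)
    have "3600 * card (C \<inter> Z) * card Z \<le> 60 * card D * card Z" using i2' by (simp add: mult.assoc)
    also have "\<dots> = card C * card Z" using cC by simp
    also have "\<dots> \<le> order G * card (C \<inter> Z)" using i1 .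
    also have "\<dots> \<le> 3481 * card Z * card (C \<inter> Z)" using u by (metis mult_le_mono1)
    finally have "3600 * (card (C \<inter> Z) * card Z) \<le> 3481 * (card (C \<inter> Z) * card Z)"
      by (simp add: mult.assoc mult.commute mult.left_commute)
    moreover have "card (C \<inter> Z) * card Z > 0" using cZ cCZ by simp
    ultimately show False by simp
  qed
qed

end

theorem mainTheorem8:
  fixes G :: "('a, 'b) monoid_scheme"
  assumes "group G" and "finite (carrier G)"
    and "strictly_pseudo_solvable G"
    and "compl_prime_graph_edge G 3 5"
  shows "\<forall>Ns. chief_series G Ns \<longrightarrow>
           (\<exists>!i. Suc i < length Ns \<and> \<not> solvable (series_factor G Ns i)) \<and>
           (\<forall>i. Suc i < length Ns \<and> \<not> solvable (series_factor G Ns i) \<longrightarrow>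
                series_factor G Ns i \<cong> alt_group 5)"
proof (intro allI impI)
  fix Ns assume cs: "chief_series G Ns"
  interpret group G by fact
  have fin: "finite (carrier G)" by fact
  have ps: "pseudo_solvable G" and nsG: "\<not> solvable G"
    using assms(3) unfolding strictly_pseudo_solvable_def by auto
  have no15: "ord y \<noteq> 15" if y: "y \<in> carrier G" for y
  proof
    assume "ord y = 15"
    then have "prime_graph_edge G 3 5" using assms(4) y
      unfolding compl_prime_graph_edge_def prime_graph_edge_def by auto
    then show False using assms(4) unfolding compl_prime_graph_edge_def by blast
  qed
  note cf = chief_facts[OF cs]
  have fac: "series_factor G Ns i \<cong> alt_group 5 \<and>
         (\<forall>T. T \<lhd> G\<lparr>carrier := Ns ! Suc i\<rparr> \<longrightarrow> Ns ! i \<subseteq> T \<longrightarrow> T = Ns ! i \<or> T = Ns ! Suc i) \<and>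
         card (Ns ! Suc i) = 60 * card (Ns ! i) \<and>
         (\<exists>a\<in>Ns ! Suc i. a [^]\<^bsub>G\<^esub> (3::nat) \<in> Ns ! i \<and> a \<notin> Ns ! i) \<and>
         (\<exists>b\<in>Ns ! Suc i. b [^]\<^bsub>G\<^esub> (5::nat) \<in> Ns ! i \<and> b \<notin> Ns ! i)"
    if i: "Suc i < length Ns" and ns: "\<not> solvable (series_factor G Ns i)" for i
  proof -
    have iL: "i < length Ns" using i by simp
    show ?thesis
      using chief_factor_A5[OF fin ps no15 cf(1)[OF iL] cf(1)[OF i] cf(2)[OF i] cf(3)[OF i]] ns
      unfolding series_factor_def by blast
  qed
  have ex: "\<exists>i. Suc i < length Ns \<and> \<not> solvable (series_factor G Ns i)"
    using all_solvable[OF cs] nsG by blast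
  have uniq: "i = j" if i: "Suc i < length Ns" "\<not> solvable (series_factor G Ns i)"
    and j: "Suc j < length Ns" "\<not> solvable (series_factor G Ns j)" for i j
  proof -
    have lt: False if ij: "i < j" and i: "Suc i < length Ns" "\<not> solvable (series_factor G Ns i)"
      and j: "Suc j < length Ns" "\<not> solvable (series_factor G Ns j)" for i j
    proof -
      have iL: "i < length Ns" and jL: "j < length Ns" using i j by auto
      obtain a where a: "a \<in> Ns ! Suc i" "a [^]\<^bsub>G\<^esub> (3::nat) \<in> Ns ! i" "a \<notin> Ns ! i" using fac[OF i] by blast
      obtain b where b: "b \<in> Ns ! Suc i" "b [^]\<^bsub>G\<^esub> (5::nat) \<in> Ns ! i" "b \<notin> Ns ! i" using fac[OF i] by blast
      obtain c where c: "c \<in> Ns ! Suc j" "c [^]\<^bsub>G\<^esub> (5::nat) \<in> Ns ! j" "c \<notin> Ns ! j" using fac[OF j] by blast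
      show False
      proof (rule two_A5_false[OF fin no15 cf(1)[OF iL] cf(1)[OF i(1)] cf(1)[OF jL] cf(1)[OF j(1)]
            _ _ _ cf(3)[OF i(1)] _ _ _ a b _ _ c])
        show "Ns ! i \<subseteq> Ns ! Suc i" using cf(2)[OF i(1)] by blast
        show "Ns ! Suc i \<subseteq> Ns ! j" using cf(4) ij jL by simp
        show "Ns ! j \<subseteq> Ns ! Suc j" using cf(2)[OF j(1)] by blast
        show "\<not> solvable (G\<lparr>carrier := Ns ! Suc i\<rparr> Mod Ns ! i)" using i(2) unfolding series_factor_def .
      qed (use fac[OF i] fac[OF j] in auto)
    qed
    show ?thesis
    proof (rule ccontr)
      assume "i \<noteq> j"
      then have "i < j \<or> j < i" by arith
      then show False using lt i j by metis
    qed
  qed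
  show "(\<exists>!i. Suc i < length Ns \<and> \<not> solvable (series_factor G Ns i)) \<and>
        (\<forall>i. Suc i < length Ns \<and> \<not> solvable (series_factor G Ns i) \<longrightarrow> series_factor G Ns i \<cong> alt_group 5)"
    using ex uniq fac by blast
qed

end
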